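(* The eigenvalue problem $-(r\eta')'=r\big(W^1+\beta r^{-2}\big)\eta$ on $(0,\infty)$, $\eta\in\mathcal D_{\mathrm{rad}}$ (in weak sense), with $W^1(r)=\frac{64}{(8+r^2)^2}$, has $\beta=-1$ as its only negative eigenvalue; it is simple and its eigenfunction is $\eta_1(r)=\frac{4r}{8+r^2}$.
   Context: $\mathcal D_{\mathrm{rad}}$ is the space of radial functions $g$ in $D^{1,2}(\mathbb R^2)$ with $\int_0^\infty r^{-1}g^2dr<\infty$, normed by $\int_0^\infty(r|g'|^2+r^{-1}g^2)dr$. Weak solution means $\int_0^\infty r\eta'\varphi'dr=\int_0^\infty r(W^1+\beta r^{-2})\eta\varphi\,dr$ for all $\varphi\in C^\infty_0(0,\infty)$. A negative $\beta$ is an eigenvalue if this problem has a nontrivial solution. *)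

theory Defs
  imports "HOL-Analysis.Analysis"
begin

definition test_fun :: "(real \<Rightarrow> real) \<Rightarrow> bool" where
  "test_fun \<phi> \<longleftrightarrow>
     (\<forall>n x. ((deriv ^^ n) \<phi>) differentiable (at x)) \<and>
     (\<exists>a b. 0 < a \<and> a \<le> b \<and> (\<forall>x. x \<notin> {a..b} \<longrightarrow> \<phi> x = 0))"

text \<open>g' is a weak derivative of g on (0,inf): g is locally absolutely continuous
  with g(b) - g(a) = integral of g' over [a,b].\<close>
definition weak_deriv :: "(real \<Rightarrow> real) \<Rightarrow> (real \<Rightarrow> real) \<Rightarrow> bool" where
  "weak_deriv g g' \<longleftrightarrow>
     (\<forall>a b. 0 < a \<longrightarrow> a \<le> b \<longrightarrow>
        set_integrable lborel {a..b} g' \<and> g b - g a = (LINT t:{a..b}|lborel. g' t))"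

definition Drad :: "(real \<Rightarrow> real) \<Rightarrow> (real \<Rightarrow> real) \<Rightarrow> bool" where
  "Drad g g' \<longleftrightarrow> weak_deriv g g' \<and>
     set_integrable lborel {0<..} (\<lambda>r. r * (g' r)\<^sup>2) \<and>
     set_integrable lborel {0<..} (\<lambda>r. (g r)\<^sup>2 / r)"

definition W1 :: "real \<Rightarrow> real" where
  "W1 r = 64 / (8 + r\<^sup>2)\<^sup>2"

definition weak_solution :: "real \<Rightarrow> (real \<Rightarrow> real) \<Rightarrow> (real \<Rightarrow> real) \<Rightarrow> bool" where
  "weak_solution \<beta> \<eta> \<eta>' \<longleftrightarrow>
     (\<forall>\<phi>. test_fun \<phi> \<longrightarrow>
        (LINT r:{0<..}|lborel. r * \<eta>' r * deriv \<phi> r) =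
        (LINT r:{0<..}|lborel. r * (W1 r + \<beta> / r\<^sup>2) * \<eta> r * \<phi> r))"

definition eigenvalue :: "real \<Rightarrow> bool" where
  "eigenvalue \<beta> \<longleftrightarrow>
     (\<exists>\<eta> \<eta>'. Drad \<eta> \<eta>' \<and> weak_solution \<beta> \<eta> \<eta>' \<and> (\<exists>r>0. \<eta> r \<noteq> 0))"

definition eta1 :: "real \<Rightarrow> real" where
  "eta1 r = 4 * r / (8 + r\<^sup>2)"

end

theory Submission
  imports Defs "HOL-Computational_Algebra.Polynomial" "HOL-Real_Asymp.Real_Asymp"
begin


definition Cn :: "nat \<Rightarrow> (real \<Rightarrow> real) \<Rightarrow> bool" where
  "Cn n f \<longleftrightarrow> (\<forall>m<n. \<forall>x. (deriv ^^ m) f differentiable (at x))"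

lemma Cn_0[simp]: "Cn 0 f"
  by (simp add: Cn_def)

lemma deriv_funpow_Suc: "(deriv ^^ Suc m) f = (deriv ^^ m) (deriv f)"
  by (simp add: funpow_Suc_right del: funpow.simps)

lemma Cn_Suc: "Cn (Suc n) f \<longleftrightarrow> (\<forall>x. f differentiable (at x)) \<and> Cn n (deriv f)"
proof
  assume a: "Cn (Suc n) f"
  have "\<forall>x. f differentiable (at x)" using a[unfolded Cn_def, rule_format, of 0] by simp
  moreover have "Cn n (deriv f)" unfolding Cn_def
  proof (intro allI impI)
    fix m x assume "m < n"
    then show "(deriv ^^ m) (deriv f) differentiable (at x)"
      using a[unfolded Cn_def, rule_format, of "Suc m" x] by (simp del: funpow.simps add: deriv_funpow_Suc)
  qed
  ultimately show "(\<forall>x. f differentiable (at x)) \<and> Cn n (deriv f)" ..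
next
  assume a: "(\<forall>x. f differentiable (at x)) \<and> Cn n (deriv f)"
  show "Cn (Suc n) f" unfolding Cn_def
  proof (intro allI impI)
    fix m x assume m: "m < Suc n"
    show "(deriv ^^ m) f differentiable (at x)"
    proof (cases m)
      case 0 then show ?thesis using a by simp
    next
      case (Suc k)
      then show ?thesis using a m unfolding Cn_def by (simp del: funpow.simps add: deriv_funpow_Suc)
    qed
  qed
qed

lemma Cn_mono: "Cn n f \<Longrightarrow> m \<le> n \<Longrightarrow> Cn m f"
  by (auto simp: Cn_def)

lemma Cn_diffD: "Cn (Suc n) f \<Longrightarrow> f differentiable (at x)"
  by (simp add: Cn_Suc)

lemma rfd: "(f::real\<Rightarrow>real) field_differentiable (at x) \<longleftrightarrow> f differentiable (at x)"
  using DERIV_deriv_iff_real_differentiable DERIV_deriv_iff_field_differentiable by blast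

lemma Cn_const: "Cn n (\<lambda>x. c)"
proof (induction n arbitrary: c)
  case (Suc n) then show ?case by (simp add: Cn_Suc)
qed simp

lemma Cn_id: "Cn n (\<lambda>x. x)"
proof (cases n)
  case (Suc m) then show ?thesis by (simp add: Cn_Suc Cn_const)
qed simp

lemma Cn_add: "Cn n f \<Longrightarrow> Cn n g \<Longrightarrow> Cn n (\<lambda>x. f x + g x)"
proof (induction n arbitrary: f g)
  case (Suc n)
  have df: "\<And>x. f differentiable (at x)" and dg: "\<And>x. g differentiable (at x)"
    using Suc.prems by (auto simp: Cn_Suc)
  have e: "deriv (\<lambda>x. f x + g x) = (\<lambda>x. deriv f x + deriv g x)"
    using df dg by (auto simp: rfd[symmetric])
  show ?case using Suc df dg by (auto simp: Cn_Suc e)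
qed simp

lemma Cn_cmult: "Cn n f \<Longrightarrow> Cn n (\<lambda>x. c * f x)"
proof (induction n arbitrary: f)
  case (Suc n)
  have df: "\<And>x. f differentiable (at x)"
    using Suc.prems by (auto simp: Cn_Suc)
  have e: "deriv (\<lambda>x. c * f x) = (\<lambda>x. c * deriv f x)"
    using df by (auto simp: rfd[symmetric])
  show ?case using Suc df by (auto simp: Cn_Suc e)
qed simp

lemma Cn_mult: "Cn n f \<Longrightarrow> Cn n g \<Longrightarrow> Cn n (\<lambda>x. f x * g x)"
proof (induction n arbitrary: f g)
  case (Suc n)
  have df: "\<And>x. f differentiable (at x)" and dg: "\<And>x. g differentiable (at x)"
    using Suc.prems by (auto simp: Cn_Suc)
  have e: "deriv (\<lambda>x. f x * g x) = (\<lambda>x. f x * deriv g x + deriv f x * g x)"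
    using df dg by (auto simp: rfd[symmetric])
  have c: "Cn n f" "Cn n g" "Cn n (deriv f)" "Cn n (deriv g)"
    using Suc.prems Cn_mono[of "Suc n" f n] Cn_mono[of "Suc n" g n] by (auto simp: Cn_Suc[of n f] Cn_Suc[of n g])
  have "Cn n (\<lambda>x. f x * deriv g x + deriv f x * g x)"
    using c by (intro Cn_add Suc.IH)
  then show ?case using df dg unfolding Cn_Suc e by (auto intro: differentiable_mult)
qed simp

lemma Cn_inverse: "Cn n f \<Longrightarrow> (\<And>x. f x \<noteq> 0) \<Longrightarrow> Cn n (\<lambda>x. inverse (f x))"
proof (induction n arbitrary: f)
  case (Suc n)
  have df: "\<And>x. f differentiable (at x)"
    using Suc.prems by (auto simp: Cn_Suc)
  have e: "deriv (\<lambda>x. inverse (f x)) = (\<lambda>x. - deriv f x * (inverse (f x) * inverse (f x)))"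
    using df Suc.prems(2) by (auto simp: rfd[symmetric] power2_eq_square field_simps)
  have d2: "(\<lambda>x. inverse (f x)) differentiable (at x)" for x
    using df Suc.prems(2) by (auto intro!: derivative_intros)
  have "Cn n f" "Cn n (deriv f)"
    using Suc.prems Cn_mono[of "Suc n" f n] by (auto simp: Cn_Suc[of n f])
  then have "Cn n (\<lambda>x. - deriv f x * (inverse (f x) * inverse (f x)))"
    using Suc by (auto intro!: Cn_mult Cn_cmult[where c="-1", simplified])
  then show ?case using d2 by (auto simp: Cn_Suc e)
qed simp

lemma Cn_affine: "Cn n f \<Longrightarrow> Cn n (\<lambda>x. f (a * x + b))"
proof (induction n arbitrary: f)
  case (Suc n)
  have df: "\<And>x. f differentiable (at x)"
    using Suc.prems by (auto simp: Cn_Suc)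
  have e: "deriv (\<lambda>x. f (a * x + b)) = (\<lambda>x. a * deriv f (a * x + b))"
    by (rule ext, rule deriv_compose_linear') (simp add: rfd df)
  have d2: "(\<lambda>x. f (a * x + b)) differentiable (at x)" for x
  proof -
    have "(f \<circ> (\<lambda>x. a * x + b)) differentiable (at x)"
      by (rule differentiable_chain_at) (auto intro!: derivative_intros df)
    then show ?thesis by (simp add: o_def)
  qed
  have "Cn n (deriv f)"
    using Suc.prems by (simp add: Cn_Suc[of n f])
  then have "Cn n (\<lambda>x. a * deriv f (a * x + b))"
    by (intro Cn_cmult Suc.IH)
  then show ?case using d2 unfolding Cn_Suc e by blast
qed simp

definition smooth :: "(real \<Rightarrow> real) \<Rightarrow> bool" where
  "smooth f \<longleftrightarrow> (\<forall>n. Cn n f)"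


lemma smooth_Cn: "smooth f \<Longrightarrow> Cn n f"
  by (simp add: smooth_def)

lemma smooth_iff: "smooth f \<longleftrightarrow> (\<forall>n x. (deriv ^^ n) f differentiable (at x))"
  unfolding smooth_def Cn_def by (meson lessI)

lemma smooth_const: "smooth (\<lambda>x. c)" by (simp add: smooth_def Cn_const)
lemma smooth_id: "smooth (\<lambda>x. x)" by (simp add: smooth_def Cn_id)
lemma smooth_add: "smooth f \<Longrightarrow> smooth g \<Longrightarrow> smooth (\<lambda>x. f x + g x)"
  by (simp add: smooth_def Cn_add)
lemma smooth_mult: "smooth f \<Longrightarrow> smooth g \<Longrightarrow> smooth (\<lambda>x. f x * g x)"
  by (simp add: smooth_def Cn_mult)
lemma smooth_cmult: "smooth f \<Longrightarrow> smooth (\<lambda>x. c * f x)"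
  by (simp add: smooth_def Cn_cmult)
lemma smooth_diff: "smooth f \<Longrightarrow> smooth g \<Longrightarrow> smooth (\<lambda>x. f x - g x)"
  using smooth_add[of f "\<lambda>x. (-1) * g x"] smooth_cmult[of g "-1"] by simp
lemma smooth_inverse: "smooth f \<Longrightarrow> (\<And>x. f x \<noteq> 0) \<Longrightarrow> smooth (\<lambda>x. inverse (f x))"
  by (simp add: smooth_def Cn_inverse)
lemma smooth_affine: "smooth f \<Longrightarrow> smooth (\<lambda>x. f (a * x + b))"
  by (simp add: smooth_def Cn_affine)

definition psi0 :: "real \<Rightarrow> real" where
  "psi0 x = (if x > 0 then exp (- inverse x) else 0)"

fun PP :: "nat \<Rightarrow> real poly" where
  "PP 0 = 1"
| "PP (Suc n) = monom 1 2 * (PP n - pderiv (PP n))"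

definition DD :: "nat \<Rightarrow> real \<Rightarrow> real" where
  "DD n x = (if x > 0 then poly (PP n) (inverse x) * exp (- inverse x) else 0)"

lemma poly_exp_at_top: "((\<lambda>y. poly q y * exp (- y)) \<longlongrightarrow> (0::real)) at_top"
proof -
  have "((\<lambda>y. \<Sum>i\<le>degree q. coeff q i * (y ^ i / exp y)) \<longlongrightarrow> (\<Sum>i\<le>degree q. coeff q i * 0)) at_top"
    by (intro tendsto_sum tendsto_mult tendsto_const tendsto_power_div_exp_0)
  then show ?thesis
    by (simp add: poly_altdef exp_minus divide_inverse sum_distrib_right mult.assoc)
qed

lemma poly_exp_at_right: "((\<lambda>x. poly q (inverse x) * exp (- inverse x)) \<longlongrightarrow> (0::real)) (at_right 0)"
  using filterlim_compose[OF poly_exp_at_top[of q] filterlim_inverse_at_top_right] by (simp add: o_def)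

lemma DD_deriv_pos:
  assumes "x > 0"
  shows "(DD n has_real_derivative DD (Suc n) x) (at x)"
proof -
  let ?p = "PP n"
  have "((\<lambda>x. poly ?p (inverse x) * exp (- inverse x)) has_real_derivative
        (poly (pderiv ?p) (inverse x) * (- (inverse x * inverse x)) * exp (- inverse x)
         + poly ?p (inverse x) * (exp (- inverse x) * (inverse x * inverse x)))) (at x)"
    using assms
    by (auto intro!: derivative_eq_intros DERIV_chain2[OF poly_DERIV] simp: power2_eq_square)
  moreover have "poly (pderiv ?p) (inverse x) * (- (inverse x * inverse x)) * exp (- inverse x)
         + poly ?p (inverse x) * (exp (- inverse x) * (inverse x * inverse x)) = DD (Suc n) x"
    using assms by (simp add: DD_def poly_monom algebra_simps power2_eq_square)
  ultimately have d: "((\<lambda>x. poly ?p (inverse x) * exp (- inverse x)) has_real_derivative DD (Suc n) x) (at x)"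
    by simp
  show ?thesis
    by (rule has_field_derivative_transform_within_open[OF d, of "{0<..}"]) (use assms in \<open>auto simp: DD_def\<close>)
qed

lemma DD_deriv_neg:
  assumes "x < 0"
  shows "(DD n has_real_derivative DD (Suc n) x) (at x)"
proof -
  have d0: "((\<lambda>x. 0) has_real_derivative 0) (at x)" by simp
  have "DD (Suc n) x = 0" using assms by (simp add: DD_def)
  with d0 have d: "((\<lambda>x. 0) has_real_derivative DD (Suc n) x) (at x)" by simp
  show ?thesis
    by (rule has_field_derivative_transform_within_open[OF d, of "{..<0}"]) (use assms in \<open>auto simp: DD_def\<close>)
qed

lemma DD_deriv_0: "(DD n has_real_derivative DD (Suc n) 0) (at 0)"
proof -
  have r: "((\<lambda>y. (DD n y - DD n 0) / (y - 0)) \<longlongrightarrow> 0) (at_right 0)"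
  proof -
    have "((\<lambda>x. poly (pCons 0 (PP n)) (inverse x) * exp (- inverse x)) \<longlongrightarrow> (0::real)) (at_right 0)"
      by (rule poly_exp_at_right)
    moreover have "\<forall>\<^sub>F y in at_right 0. poly (pCons 0 (PP n)) (inverse y) * exp (- inverse y) = (DD n y - DD n 0) / (y - 0)"
      by (rule eventually_mono[OF eventually_at_right_less]) (simp add: DD_def field_simps)
    ultimately show ?thesis
      by (rule Lim_transform_eventually)
  qed
  have l: "((\<lambda>y. (DD n y - DD n 0) / (y - 0)) \<longlongrightarrow> 0) (at_left 0)"
    by (rule tendsto_eventually) (auto simp: eventually_at_left_real[of "-1" 0] DD_def intro!: exI[of _ "-1"] eventually_at_leftI[of "-1"])
  have "((\<lambda>y. (DD n y - DD n 0) / (y - 0)) \<longlongrightarrow> 0) (at 0)"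
    using r l by (simp add: filterlim_at_split)
  then show ?thesis
    by (simp add: has_field_derivative_iff DD_def)
qed

lemma DD_deriv: "(DD n has_real_derivative DD (Suc n) x) (at x)"
  using DD_deriv_pos DD_deriv_neg DD_deriv_0 by (cases x "0::real" rule: linorder_cases) auto

lemma psi0_DD: "(deriv ^^ n) psi0 = DD n"
proof (induction n)
  case 0 then show ?case by (auto simp: DD_def psi0_def fun_eq_iff)
next
  case (Suc n)
  show ?case by (simp add: Suc.IH) (rule ext, rule DERIV_imp_deriv[OF DD_deriv])
qed

lemma smooth_psi0: "smooth psi0"
  unfolding smooth_iff psi0_DD
  using DD_deriv real_differentiable_def by blast


lemma smooth_differentiable: "smooth f \<Longrightarrow> f differentiable (at x)"
  unfolding smooth_iff by (metis funpow_0)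

lemma smooth_cont: "smooth f \<Longrightarrow> continuous_on S f"
  by (rule continuous_at_imp_continuous_on) (auto intro: differentiable_imp_continuous_within smooth_differentiable)

lemma integral_deriv_right:
  fixes \<psi> :: "real \<Rightarrow> real"
  assumes "continuous_on UNIV \<psi>" "c < x"
  shows "((\<lambda>u. integral {c..u} \<psi>) has_real_derivative \<psi> x) (at x)"
proof -
  have "((\<lambda>u. integral {c..u} \<psi>) has_real_derivative \<psi> x) (at x within {c..x+1})"
    using assms by (intro integral_has_real_derivative) (auto intro: continuous_on_subset)
  then have "((\<lambda>u. integral {c..u} \<psi>) has_real_derivative \<psi> x) (at x within {c<..<x+1})"
    by (rule DERIV_subset) (auto simp: subset_iff)
  moreover have "at x within {c<..<x+1} = at x"
    using assms by (intro at_within_open) auto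
  ultimately show ?thesis by simp
qed

lemma test_from:
  fixes \<psi> :: "real \<Rightarrow> real"
  assumes sm: "smooth \<psi>" and ab: "0 < a" "a \<le> b" and supp: "\<And>x. x \<notin> {a<..<b} \<Longrightarrow> \<psi> x = 0"
    and int0: "integral {a..b} \<psi> = 0"
  shows "test_fun (\<lambda>x. integral {0..x} \<psi>)"
    and "\<And>x. ((\<lambda>x. integral {0..x} \<psi>) has_real_derivative \<psi> x) (at x)"
    and "\<And>x. x \<notin> {a<..<b} \<Longrightarrow> integral {0..x} \<psi> = 0"
proof -
  let ?\<phi> = "\<lambda>x. integral {0..x} \<psi>"
  have cont: "continuous_on S \<psi>" for S using smooth_cont[OF sm] .
  have intg: "\<psi> integrable_on {u..v}" for u v
    by (rule integrable_continuous_interval) (rule cont)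
  have zero: "integral {u..v} \<psi> = 0" if "\<And>t. t \<in> {u..v} \<Longrightarrow> \<psi> t = 0" for u v
  proof -
    have "integral {u..v} \<psi> = integral {u..v} (\<lambda>_. 0::real)"
      by (rule integral_cong) (use that in auto)
    then show ?thesis by simp
  qed
  have low: "?\<phi> x = 0" if "x \<le> a" for x
    using that by (intro zero) (auto intro!: supp)
  have high: "?\<phi> x = 0" if "b \<le> x" for x
  proof -
    have "?\<phi> x = integral {0..a} \<psi> + integral {a..x} \<psi>"
      by (rule Henstock_Kurzweil_Integration.integral_combine[symmetric]) (use ab that intg in auto)
    also have "integral {a..x} \<psi> = integral {a..b} \<psi> + integral {b..x} \<psi>"
      by (rule Henstock_Kurzweil_Integration.integral_combine[symmetric]) (use ab that intg in auto)
    also have "integral {0..a} \<psi> = 0"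
      using ab by (intro zero) (auto intro!: supp)
    also have "integral {b..x} \<psi> = 0"
      by (rule zero) (use that ab in \<open>auto intro!: supp\<close>)
    finally show ?thesis using int0 by simp
  qed
  show out: "\<And>x. x \<notin> {a<..<b} \<Longrightarrow> integral {0..x} \<psi> = 0"
    using low high by force
  show der: "\<And>x. (?\<phi> has_real_derivative \<psi> x) (at x)"
  proof -
    fix x :: real
    show "(?\<phi> has_real_derivative \<psi> x) (at x)"
    proof (cases "x < a")
      case True
      have d0: "((\<lambda>x. 0) has_real_derivative 0) (at x)" by simp
      have "\<psi> x = 0" using True supp by auto
      with d0 have d: "((\<lambda>x. 0) has_real_derivative \<psi> x) (at x)" by simp
      show ?thesis
        by (rule has_field_derivative_transform_within_open[OF d, of "{..<a}"]) (use True low in auto)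
    next
      case False
      then have "0 < x" using ab by simp
      then show ?thesis by (intro integral_deriv_right cont)
    qed
  qed
  have dphi: "deriv ?\<phi> = \<psi>"
    using der by (auto intro!: DERIV_imp_deriv)
  show "test_fun ?\<phi>"
    unfolding test_fun_def
  proof (intro conjI allI)
    fix n x
    show "(deriv ^^ n) ?\<phi> differentiable (at x)"
    proof (cases n)
      case 0 then show ?thesis using der real_differentiable_def by auto
    next
      case (Suc m)
      then show ?thesis using sm unfolding smooth_iff by (simp only: deriv_funpow_Suc dphi)
    qed
  next
    show "\<exists>a b. 0 < a \<and> a \<le> b \<and> (\<forall>x. x \<notin> {a..b} \<longrightarrow> ?\<phi> x = 0)"
      using ab out greaterThanLessThan_subseteq_atLeastAtMost_iff by blast
  qed
qed


lemma set_integrable_cont_mult: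
  fixes f g :: "real \<Rightarrow> real"
  assumes f: "set_integrable lborel {a..b} f" and g: "continuous_on UNIV g"
  shows "set_integrable lborel {a..b} (\<lambda>r. g r * f r)"
proof -
  have "compact (g ` {a..b})"
    by (rule compact_continuous_image) (use g in \<open>auto intro: continuous_on_subset\<close>)
  then obtain M where M: "\<And>r. r \<in> {a..b} \<Longrightarrow> \<bar>g r\<bar> \<le> M"
    by (metis compact_imp_bounded bounded_real image_eqI)
  have fm: "(\<lambda>x. indicator {a..b} x *\<^sub>R f x) \<in> borel_measurable lborel"
    using f unfolding set_integrable_def by (rule borel_measurable_integrable)
  have gm: "g \<in> borel_measurable lborel"
    using g by (simp add: borel_measurable_continuous_onI)
  show ?thesis
  proof (rule set_integrable_bound[where f="\<lambda>r. M * f r"])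
    show "set_integrable lborel {a..b} (\<lambda>r. M * f r)" using f by simp
    have "(\<lambda>x. g x * (indicator {a..b} x *\<^sub>R f x)) \<in> borel_measurable lborel"
      using fm gm by measurable
    then show "set_borel_measurable lborel {a..b} (\<lambda>r. g r * f r)"
      unfolding set_borel_measurable_def by (simp add: mult.left_commute)
    show "AE x in lborel. x \<in> {a..b} \<longrightarrow> norm (g x * f x) \<le> norm (M * f x)"
    proof (intro AE_I2 impI)
      fix x assume "x \<in> {a..b}"
      then have "\<bar>g x\<bar> \<le> \<bar>M\<bar>" using M[of x] by linarith
      then show "norm (g x * f x) \<le> norm (M * f x)"
        by (simp add: abs_mult mult_right_mono)
    qed
  qed
qed

lemma W1_pos: "0 < (8 + r\<^sup>2::real)"
  by (simp add: add_pos_nonneg)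

lemma W1_cont: "continuous_on S W1"
proof -
  have "\<And>r. (8 + r\<^sup>2::real)\<^sup>2 \<noteq> 0" using W1_pos by (metis less_irrefl power_not_zero)
  then show ?thesis unfolding W1_def[abs_def] by (intro continuous_intros) auto
qed

lemma cont_on_pos:
  assumes "\<And>r. 0 < r \<Longrightarrow> isCont f r" "0 < (a::real)" shows "continuous_on {a..b} f"
proof (intro continuous_at_imp_continuous_on ballI)
  fix x assume "x \<in> {a..b}"
  then have "0 < x" using assms(2) by simp
  then show "isCont f x" by (rule assms(1))
qed


lemma integral_ext_zero:
  fixes f :: "real \<Rightarrow> real"
  assumes f: "f integrable_on {A..B}" and le: "A \<le> a" "a \<le> b" "b \<le> B"
    and z: "\<And>x. x \<in> {A..B} \<Longrightarrow> x \<notin> {a<..<b} \<Longrightarrow> f x = 0"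
  shows "integral {A..B} f = integral {a..b} f"
proof -
  have zero: "integral {u..v} f = 0" if "\<And>t. t \<in> {u..v} \<Longrightarrow> f t = 0" for u v
  proof -
    have "integral {u..v} f = integral {u..v} (\<lambda>_. 0::real)"
      by (rule integral_cong) (use that in auto)
    then show ?thesis by simp
  qed
  have fb: "f integrable_on {a..B}" by (rule integrable_subinterval_real[OF f]) (use le in auto)
  have "integral {A..B} f = integral {A..a} f + integral {a..B} f"
    by (rule Henstock_Kurzweil_Integration.integral_combine[symmetric]) (use le f in auto)
  also have "integral {a..B} f = integral {a..b} f + integral {b..B} f"
    by (rule Henstock_Kurzweil_Integration.integral_combine[symmetric]) (use le fb in auto)
  also have "integral {A..a} f = 0" by (rule zero) (use le z in auto)
  also have "integral {b..B} f = 0" by (rule zero) (use le z in auto)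
  finally show ?thesis by simp
qed

definition B0 :: "real \<Rightarrow> real" where
  "B0 t = psi0 (t - 1) * psi0 (2 - t)"

lemma psi0_nonneg: "0 \<le> psi0 x" by (simp add: psi0_def)
lemma psi0_le1: "psi0 x \<le> 1" by (simp add: psi0_def)
lemma psi0_pos: "0 < x \<Longrightarrow> 0 < psi0 x" by (simp add: psi0_def)
lemma psi0_zero: "x \<le> 0 \<Longrightarrow> psi0 x = 0" by (simp add: psi0_def)

lemma smooth_psi0_affine: "smooth (\<lambda>t. psi0 (a * t + b))"
  by (rule smooth_affine[OF smooth_psi0])

lemma smooth_B0: "smooth B0"
proof -
  have "smooth (\<lambda>t. psi0 (1 * t + (-1)) * psi0 ((-1) * t + 2))"
    by (intro smooth_mult smooth_psi0_affine)
  then show ?thesis unfolding B0_def[abs_def] by simp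
qed

lemma B0_supp: "x \<notin> {1<..<2} \<Longrightarrow> B0 x = 0"
  by (auto simp: B0_def psi0_zero)

lemma B0_mass: "0 < integral {1..2} B0"
proof -
  have "integral {1..2::real} (\<lambda>_. 0::real) < integral {1..2} B0"
    by (rule integral_less_real) (auto simp: B0_def intro!: smooth_cont[OF smooth_B0, unfolded B0_def[abs_def]] mult_pos_pos psi0_pos)
  then show ?thesis by simp
qed

locale wsol =
  fixes \<eta> \<eta>' :: "real \<Rightarrow> real" and \<beta> :: real
  assumes wd: "weak_deriv \<eta> \<eta>'" and ws: "weak_solution \<beta> \<eta> \<eta>'"
begin

lemma etap_int: "0 < a \<Longrightarrow> set_integrable lborel {a..b} \<eta>'"
  using wd unfolding weak_deriv_def by (cases "a \<le> b") auto

lemma etap_hk: "0 < a \<Longrightarrow> \<eta>' integrable_on {a..b}"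
  using set_borel_integral_eq_integral(1)[OF etap_int] .

lemma eta_diff: "0 < a \<Longrightarrow> a \<le> b \<Longrightarrow> \<eta> b - \<eta> a = integral {a..b} \<eta>'"
  using wd set_borel_integral_eq_integral(2)[OF etap_int] unfolding weak_deriv_def by auto

lemma eta_cont: assumes "0 < r" shows "isCont \<eta> r"
proof -
  let ?a = "r/2" and ?b = "r+1"
  have "continuous_on {?a..?b} (\<lambda>t. \<eta> ?a + integral {?a..t} \<eta>')"
    using assms by (intro continuous_intros indefinite_integral_continuous_1 etap_hk) auto
  moreover have "\<And>t. t \<in> {?a..?b} \<Longrightarrow> \<eta> ?a + integral {?a..t} \<eta>' = \<eta> t"
    using assms eta_diff[of ?a] by force
  moreover have "continuous_on {?a..?b} \<eta> = continuous_on {?a..?b} (\<lambda>t. \<eta> ?a + integral {?a..t} \<eta>')"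
    by (rule continuous_on_cong) (use calculation(2) in auto)
  ultimately have "continuous_on {?a..?b} \<eta>" by simp
  then show ?thesis
    by (rule continuous_on_interior) (use assms in auto)
qed

definition G :: "real \<Rightarrow> real" where
  "G r = r * (W1 r + \<beta> / r\<^sup>2) * \<eta> r"

lemma G_cont: "0 < r \<Longrightarrow> isCont G r"
  unfolding G_def[abs_def]
  using W1_cont[of UNIV] eta_cont
  by (intro continuous_intros) (auto simp: continuous_on_eq_continuous_at)

definition H :: "real \<Rightarrow> real" where
  "H = (SOME H. \<forall>r::real. 0 < r \<longrightarrow> (H has_vector_derivative G r) (at r))"

lemma H_deriv: "0 < r \<Longrightarrow> (H has_real_derivative G r) (at r)"
proof -
  have "\<exists>H. \<forall>r::real. ereal 0 < r \<longrightarrow> r < \<infinity> \<longrightarrow> (H has_vector_derivative G r) (at r)"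
    by (rule einterval_antiderivative) (auto intro: G_cont)
  then have "\<exists>H. \<forall>r::real. 0 < r \<longrightarrow> (H has_vector_derivative G r) (at r)"
    by simp
  from someI_ex[OF this] have "\<forall>r::real. 0 < r \<longrightarrow> (H has_vector_derivative G r) (at r)"
    unfolding H_def .
  then show "0 < r \<Longrightarrow> (H has_real_derivative G r) (at r)"
    by (simp add: has_real_derivative_iff_has_vector_derivative)
qed

lemma H_cont: "0 < r \<Longrightarrow> isCont H r"
  using H_deriv DERIV_isCont by blast

lemma weak_eq:
  fixes \<psi> :: "real \<Rightarrow> real"
  assumes sm: "smooth \<psi>" and ab: "0 < a" "a \<le> b" and supp: "\<And>x. x \<notin> {a<..<b} \<Longrightarrow> \<psi> x = 0"
    and int0: "integral {a..b} \<psi> = 0"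
  shows "integral {a..b} (\<lambda>r. r * \<psi> r * \<eta>' r) + integral {a..b} (\<lambda>r. H r * \<psi> r) = 0"
proof -
  define \<phi> where "\<phi> = (\<lambda>x. integral {0..x} \<psi>)"
  have tf: "test_fun \<phi>" and d\<phi>: "\<And>x. (\<phi> has_real_derivative \<psi> x) (at x)"
    and \<phi>0: "\<And>x. x \<notin> {a<..<b} \<Longrightarrow> \<phi> x = 0"
    using test_from[OF assms] unfolding \<phi>_def by auto
  have dd: "deriv \<phi> = \<psi>" using d\<phi> by (auto intro!: DERIV_imp_deriv)
  have w: "(LINT r:{0<..}|lborel. r * \<eta>' r * deriv \<phi> r) =
        (LINT r:{0<..}|lborel. r * (W1 r + \<beta> / r\<^sup>2) * \<eta> r * \<phi> r)"
    using ws tf unfolding weak_solution_def by blast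
  have cpsi: "continuous_on S \<psi>" for S using smooth_cont[OF sm] .
  have cphi: "continuous_on S \<phi>" for S
    using d\<phi> by (intro continuous_at_imp_continuous_on ballI) (meson DERIV_isCont)
  have e1: "(\<lambda>r. indicator {0<..} r *\<^sub>R (r * \<eta>' r * deriv \<phi> r)) = (\<lambda>r. indicator {a..b} r *\<^sub>R (r * \<psi> r * \<eta>' r))"
  proof
    fix r :: real
    show "indicator {0<..} r *\<^sub>R (r * \<eta>' r * deriv \<phi> r) = indicator {a..b} r *\<^sub>R (r * \<psi> r * \<eta>' r)"
    proof (cases "r \<in> {a<..<b}")
      case True then show ?thesis using ab by (auto simp: dd indicator_def)
    next
      case False then show ?thesis using supp[OF False] by (simp add: dd)
    qed
  qed
  have si1: "set_integrable lborel {a..b} (\<lambda>r. (r * \<psi> r) * \<eta>' r)"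
    using ab by (intro set_integrable_cont_mult etap_int continuous_intros cpsi)
  have L: "(LINT r:{0<..}|lborel. r * \<eta>' r * deriv \<phi> r) = integral {a..b} (\<lambda>r. r * \<psi> r * \<eta>' r)"
    unfolding set_lebesgue_integral_def e1
    using set_borel_integral_eq_integral(2)[OF si1] unfolding set_lebesgue_integral_def by simp
  have cG: "continuous_on {a..b} G" by (rule cont_on_pos[OF G_cont ab(1)])
  have cH: "continuous_on {a..b} H" by (rule cont_on_pos[OF H_cont ab(1)])
  have e2: "(\<lambda>r. indicator {0<..} r *\<^sub>R (r * (W1 r + \<beta> / r\<^sup>2) * \<eta> r * \<phi> r)) = (\<lambda>r. indicator {a..b} r *\<^sub>R (G r * \<phi> r))"
  proof
    fix r :: real
    show "indicator {0<..} r *\<^sub>R (r * (W1 r + \<beta> / r\<^sup>2) * \<eta> r * \<phi> r) = indicator {a..b} r *\<^sub>R (G r * \<phi> r)"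
    proof (cases "r \<in> {a<..<b}")
      case True then show ?thesis using ab by (auto simp: G_def indicator_def)
    next
      case False then show ?thesis using \<phi>0[OF False] by simp
    qed
  qed
  have si2: "set_integrable lborel {a..b} (\<lambda>r. G r * \<phi> r)"
    by (intro borel_integrable_atLeastAtMost' continuous_intros cG cphi)
  have R: "(LINT r:{0<..}|lborel. r * (W1 r + \<beta> / r\<^sup>2) * \<eta> r * \<phi> r) = integral {a..b} (\<lambda>r. G r * \<phi> r)"
    unfolding set_lebesgue_integral_def e2
    using set_borel_integral_eq_integral(2)[OF si2] unfolding set_lebesgue_integral_def by simp
  have ibp: "((\<lambda>r. G r * \<phi> r) has_integral (- integral {a..b} (\<lambda>r. H r * \<psi> r))) {a..b}"
  proof (rule integration_by_parts[OF bounded_bilinear_mult ab(2) cH cphi])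
    show "\<And>x. x \<in> {a..b} \<Longrightarrow> (H has_vector_derivative G x) (at x)"
      using ab H_deriv by (auto simp: has_real_derivative_iff_has_vector_derivative[symmetric])
    show "\<And>x. x \<in> {a..b} \<Longrightarrow> (\<phi> has_vector_derivative \<psi> x) (at x)"
      using d\<phi> by (auto simp: has_real_derivative_iff_has_vector_derivative[symmetric])
    have "\<phi> a = 0" "\<phi> b = 0" using \<phi>0 by auto
    moreover have "((\<lambda>r. H r * \<psi> r) has_integral integral {a..b} (\<lambda>r. H r * \<psi> r)) {a..b}"
      by (intro integrable_integral integrable_continuous_interval continuous_intros cH cpsi)
    ultimately show "((\<lambda>x. H x * \<psi> x) has_integral H b * \<phi> b - H a * \<phi> a - - integral {a..b} (\<lambda>r. H r * \<psi> r)) {a..b}"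
      by simp
  qed
  show ?thesis
    using w L R integral_unique[OF ibp] by simp
qed

definition Lam :: "(real \<Rightarrow> real) \<Rightarrow> real \<Rightarrow> real \<Rightarrow> real" where
  "Lam \<psi> a b = integral {a..b} (\<lambda>r. r * \<psi> r * \<eta>' r) + integral {a..b} (\<lambda>r. H r * \<psi> r)"

lemma intg1:
  assumes "smooth \<psi>" "0 < a" shows "(\<lambda>r. r * \<psi> r * \<eta>' r) integrable_on {a..b}"
proof -
  have "continuous_on UNIV (\<lambda>r. r * \<psi> r)" using assms(1) by (intro continuous_intros smooth_cont)
  then show ?thesis
    using set_borel_integral_eq_integral(1)[OF set_integrable_cont_mult[OF etap_int[OF assms(2)], of "\<lambda>r. r * \<psi> r" b]]
    by simp
qed

lemma intg2: "smooth \<psi> \<Longrightarrow> 0 < a \<Longrightarrow> (\<lambda>r. H r * \<psi> r) integrable_on {a..b}"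
  by (intro integrable_continuous_interval continuous_intros cont_on_pos[OF H_cont] smooth_cont)

lemma Lam_ext:
  assumes sm: "smooth \<psi>" and supp: "\<And>x. x \<notin> {a<..<b} \<Longrightarrow> \<psi> x = 0"
    and le: "0 < A" "A \<le> a" "a \<le> b" "b \<le> B"
  shows "Lam \<psi> A B = Lam \<psi> a b"
  unfolding Lam_def
  using integral_ext_zero[OF intg1[OF sm le(1)] le(2-4)] integral_ext_zero[OF intg2[OF sm le(1)] le(2-4)] supp
  by simp

lemma Lam_lin:
  assumes "smooth \<psi>" "smooth ch" "0 < a"
  shows "Lam (\<lambda>t. \<psi> t - c * ch t) a b = Lam \<psi> a b - c * Lam ch a b"
proof -
  have e1: "(\<lambda>r. r * (\<psi> r - c * ch r) * \<eta>' r) = (\<lambda>r. r * \<psi> r * \<eta>' r - c * (r * ch r * \<eta>' r))"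
    by (auto simp: algebra_simps)
  have e2: "(\<lambda>r. H r * (\<psi> r - c * ch r)) = (\<lambda>r. H r * \<psi> r - c * (H r * ch r))"
    by (auto simp: algebra_simps)
  have i1: "integral {a..b} (\<lambda>r. r * \<psi> r * \<eta>' r - c * (r * ch r * \<eta>' r)) =
      integral {a..b} (\<lambda>r. r * \<psi> r * \<eta>' r) - c * integral {a..b} (\<lambda>r. r * ch r * \<eta>' r)"
    using intg1[OF assms(1,3)] intg1[OF assms(2,3)]
    by (subst integral_diff) (auto intro: integrable_on_mult_right)
  have i2: "integral {a..b} (\<lambda>r. H r * \<psi> r - c * (H r * ch r)) =
      integral {a..b} (\<lambda>r. H r * \<psi> r) - c * integral {a..b} (\<lambda>r. H r * ch r)"
    using intg2[OF assms(1,3)] intg2[OF assms(2,3)]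
    by (subst integral_diff) (auto intro: integrable_on_mult_right)
  show ?thesis
    unfolding Lam_def e1 e2 i1 i2 by (simp add: algebra_simps)
qed

definition c0 :: real where "c0 = Lam B0 1 2 / integral {1..2} B0"

lemma gen_eq:
  assumes sm: "smooth \<psi>" and ab: "0 < a" "a \<le> b" and supp: "\<And>x. x \<notin> {a<..<b} \<Longrightarrow> \<psi> x = 0"
  shows "Lam \<psi> a b = c0 * integral {a..b} \<psi>"
proof -
  define A where "A = min a 1"
  define B where "B = max b 2"
  define m0 where "m0 = integral {1..2} B0"
  define I where "I = integral {a..b} \<psi>"
  define ch where "ch = (\<lambda>t. \<psi> t - (I / m0) * B0 t)"
  have m0: "0 < m0" unfolding m0_def by (rule B0_mass)
  have le: "0 < A" "A \<le> a" "a \<le> b" "b \<le> B" "A \<le> 1" "(1::real) \<le> 2" "2 \<le> B"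
    using ab by (auto simp: A_def B_def)
  have smc: "smooth ch" unfolding ch_def by (rule smooth_diff[OF sm smooth_cmult[OF smooth_B0]])
  have suppc: "ch x = 0" if "x \<notin> {A<..<B}" for x
  proof -
    have "x \<notin> {a<..<b}" "x \<notin> {1<..<2}" using that le by auto
    then show ?thesis unfolding ch_def using supp B0_supp by simp
  qed
  have ip: "integral {A..B} \<psi> = I" unfolding I_def
    by (rule integral_ext_zero[OF integrable_continuous_interval[OF smooth_cont[OF sm]]]) (use le supp in auto)
  have ib: "integral {A..B} B0 = m0" unfolding m0_def
    by (rule integral_ext_zero[OF integrable_continuous_interval[OF smooth_cont[OF smooth_B0]]]) (use le B0_supp in auto)
  have "integral {A..B} ch = integral {A..B} \<psi> - (I / m0) * integral {A..B} B0"
  proof -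
    have int1: "\<psi> integrable_on {A..B}" by (intro integrable_continuous_interval smooth_cont sm)
    have int2: "(\<lambda>t. (I / m0) * B0 t) integrable_on {A..B}"
      by (intro integrable_on_mult_right integrable_continuous_interval smooth_cont smooth_B0)
    show ?thesis unfolding ch_def integral_diff[OF int1 int2] by simp
  qed
  then have i0: "integral {A..B} ch = 0" using ip ib m0 by simp
  have "Lam ch A B = 0"
    using weak_eq[OF smc le(1) _ suppc i0] le unfolding Lam_def by simp
  moreover have "Lam ch A B = Lam \<psi> A B - (I / m0) * Lam B0 A B"
    unfolding ch_def by (rule Lam_lin[OF sm smooth_B0 le(1)])
  moreover have "Lam \<psi> A B = Lam \<psi> a b" by (rule Lam_ext[OF sm supp]) (use le in auto)
  moreover have "Lam B0 A B = Lam B0 1 2" by (rule Lam_ext[OF smooth_B0 B0_supp]) (use le in auto)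
  ultimately show ?thesis
    unfolding c0_def I_def m0_def by simp
qed

end


definition hh :: "real \<Rightarrow> real \<Rightarrow> real" where
  "hh x t = t + exp (inverse x) * psi0 (x - t) * ((x - t)\<^sup>2 + 1)"

definition qq :: "real \<Rightarrow> real \<Rightarrow> nat \<Rightarrow> real \<Rightarrow> real" where
  "qq x y n t = psi0 (real (Suc n) * (t - x)) * psi0 (real (Suc n) * (y - t))"

definition bump :: "real \<Rightarrow> real \<Rightarrow> nat \<Rightarrow> real \<Rightarrow> real" where
  "bump x y n t = qq x y n t * inverse (hh x t)"

lemma hh_eq: "x \<le> t \<Longrightarrow> hh x t = t"
  by (simp add: hh_def psi0_zero)

lemma hh_pos:
  assumes x: "0 < x" shows "0 < hh x t"
proof (cases "x \<le> t")
  case True then show ?thesis using x hh_eq by simp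
next
  case False
  show ?thesis
  proof (cases "0 < t")
    case True
    have "0 \<le> exp (inverse x) * psi0 (x - t) * ((x - t)\<^sup>2 + 1)"
      by (intro mult_nonneg_nonneg psi0_nonneg) auto
    then show ?thesis using True by (simp add: hh_def)
  next
    case t: False
    have s: "x \<le> x - t" using t by simp
    have "inverse (x - t) \<le> inverse x" using x s by (simp add: le_imp_inverse_le)
    then have "1 \<le> exp (inverse x) * psi0 (x - t)"
      using x s by (simp add: psi0_def exp_minus[symmetric] exp_add[symmetric])
    then have "1 * ((x - t)\<^sup>2 + 1) \<le> exp (inverse x) * psi0 (x - t) * ((x - t)\<^sup>2 + 1)"
      by (intro mult_right_mono) auto
    then have "(x - t)\<^sup>2 + 1 \<le> exp (inverse x) * psi0 (x - t) * ((x - t)\<^sup>2 + 1)" by simp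
    moreover have "0 < t + ((x - t)\<^sup>2 + 1)"
    proof -
      have "0 \<le> x * x" by simp
      moreover have "x * t \<le> 0" using t x by (simp add: mult_nonneg_nonpos)
      moreover have "0 \<le> (2 * t + 1) * (2 * t + 1)" by simp
      moreover have "(2 * t + 1) * (2 * t + 1) = 4 * (t * t) + 4 * t + 1" by algebra
      moreover have "t + ((x - t)\<^sup>2 + 1) = (t + t * t + 1) + (x * x - 2 * (x * t))"
        by (simp add: power2_eq_square algebra_simps)
      ultimately show ?thesis by linarith
    qed
    ultimately show ?thesis by (simp add: hh_def)
  qed
qed

lemma smooth_hh: "smooth (hh x)"
proof -
  have sx: "smooth (\<lambda>t. x - t)" by (intro smooth_diff smooth_const smooth_id)
  have "smooth (\<lambda>t. t + exp (inverse x) * (psi0 ((-1) * t + x) * ((x - t) * (x - t) + 1)))"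
    by (intro smooth_add smooth_id smooth_cmult smooth_mult smooth_psi0_affine sx smooth_const)
  then show ?thesis unfolding hh_def[abs_def] by (simp add: power2_eq_square mult.assoc)
qed

lemma smooth_qq: "smooth (qq x y n)"
proof -
  have "smooth (\<lambda>t. psi0 (real (Suc n) * t + (- real (Suc n) * x)) * psi0 ((- real (Suc n)) * t + real (Suc n) * y))"
    by (intro smooth_mult smooth_psi0_affine)
  then show ?thesis unfolding qq_def[abs_def] by (simp add: algebra_simps)
qed

lemma smooth_bump: "0 < x \<Longrightarrow> smooth (bump x y n)"
  unfolding bump_def[abs_def]
  by (intro smooth_mult smooth_qq smooth_inverse smooth_hh) (metis hh_pos less_irrefl)

lemma qq_supp: "t \<notin> {x<..<y} \<Longrightarrow> qq x y n t = 0"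
  by (auto simp: qq_def psi0_zero mult_nonneg_nonpos mult_nonneg_nonneg)

lemma bump_supp: "t \<notin> {x<..<y} \<Longrightarrow> bump x y n t = 0"
  by (simp add: bump_def qq_supp)

lemma bump_on: "x \<le> t \<Longrightarrow> bump x y n t = qq x y n t / t"
  by (simp add: bump_def hh_eq divide_inverse)

lemma qq_bound: "\<bar>qq x y n t\<bar> \<le> 1"
proof -
  let ?a = "psi0 (real (Suc n) * (t - x))" and ?b = "psi0 (real (Suc n) * (y - t))"
  have "?a * ?b \<le> 1" by (rule mult_le_one[OF psi0_le1 psi0_nonneg psi0_le1])
  moreover have "0 \<le> ?a * ?b" by (simp add: psi0_nonneg)
  ultimately show ?thesis unfolding qq_def by simp
qed

lemma psi0_lim: "0 < s \<Longrightarrow> (\<lambda>n. psi0 (real (Suc n) * s)) \<longlonglongrightarrow> 1"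
proof -
  assume s: "0 < s"
  have "(\<lambda>n. exp (- (inverse (real (Suc n)) * inverse s))) \<longlonglongrightarrow> exp (- (0 * inverse s))"
    by (intro tendsto_intros LIMSEQ_inverse_real_of_nat)
  moreover have "psi0 (real (Suc n) * s) = exp (- (inverse (real (Suc n)) * inverse s))" for n
    using s by (simp add: psi0_def mult_pos_pos)
  ultimately show ?thesis by simp
qed

lemma qq_lim: "t \<in> {x<..<y} \<Longrightarrow> (\<lambda>n. qq x y n t) \<longlonglongrightarrow> 1"
  unfolding qq_def using psi0_lim[of "t - x"] psi0_lim[of "y - t"]
  by (auto dest: tendsto_mult)

lemma qq_dct:
  fixes f :: "real \<Rightarrow> real"
  assumes f: "f integrable_on {x..y}" "(\<lambda>r. \<bar>f r\<bar>) integrable_on {x..y}"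
    and qf: "\<And>n. (\<lambda>r. qq x y n r * f r) integrable_on {x..y}"
  shows "(\<lambda>n. integral {x..y} (\<lambda>r. qq x y n r * f r)) \<longlonglongrightarrow> integral {x..y} f"
proof -
  define g where "g = (\<lambda>r. if r \<in> {x<..<y} then f r else 0)"
  have "(\<lambda>n. integral {x..y} (\<lambda>r. qq x y n r * f r)) \<longlonglongrightarrow> integral {x..y} g"
  proof (rule dominated_convergence(2)[OF qf f(2)])
    show "\<And>n r. r \<in> {x..y} \<Longrightarrow> norm (qq x y n r * f r) \<le> \<bar>f r\<bar>"
      using qq_bound by (simp add: abs_mult mult_left_le_one_le)
    show "\<And>r. r \<in> {x..y} \<Longrightarrow> (\<lambda>n. qq x y n r * f r) \<longlonglongrightarrow> g r"
    proof -
      fix r assume "r \<in> {x..y}"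
      show "(\<lambda>n. qq x y n r * f r) \<longlonglongrightarrow> g r"
      proof (cases "r \<in> {x<..<y}")
        case True
        then show ?thesis unfolding g_def using tendsto_mult[OF qq_lim[OF True] tendsto_const[of "f r"]] by simp
      next
        case False
        then have "g r = 0" "\<And>n. qq x y n r = 0" by (auto simp: g_def qq_supp simp del: greaterThanLessThan_iff)
        then show ?thesis by simp
      qed
    qed
  qed
  moreover have "integral {x..y} g = integral {x..y} f"
    by (rule integral_spike[of "{x,y}"]) (auto simp: g_def)
  ultimately show ?thesis by simp
qed


lemma integral_deriv_right':
  fixes \<psi> :: "real \<Rightarrow> real"
  assumes "continuous_on {c..x+1} \<psi>" "c < x"
  shows "((\<lambda>u. integral {c..u} \<psi>) has_real_derivative \<psi> x) (at x)"
proof -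
  have "((\<lambda>u. integral {c..u} \<psi>) has_real_derivative \<psi> x) (at x within {c..x+1})"
    using assms by (intro integral_has_real_derivative) auto
  then have "((\<lambda>u. integral {c..u} \<psi>) has_real_derivative \<psi> x) (at x within {c<..<x+1})"
    by (rule DERIV_subset) (auto simp: subset_iff)
  moreover have "at x within {c<..<x+1} = at x"
    using assms by (intro at_within_open) auto
  ultimately show ?thesis by simp
qed

context wsol
begin

lemma etap_abs: "0 < a \<Longrightarrow> (\<lambda>r. \<bar>\<eta>' r\<bar>) integrable_on {a..b}"
  using set_borel_integral_eq_integral(1)[OF set_integrable_abs[OF etap_int]] by simp

lemma cont_pos_fun: "0 < a \<Longrightarrow> continuous_on {a..b} (\<lambda>r. H r / r)" "0 < a \<Longrightarrow> continuous_on {a..b} (\<lambda>r. 1 / r)"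
  by (auto intro!: continuous_intros cont_on_pos[OF H_cont])

lemma int_identity:
  assumes xy: "0 < x" "x < y"
  shows "integral {x..y} \<eta>' + integral {x..y} (\<lambda>r. H r / r) = c0 * integral {x..y} (\<lambda>r. 1 / r)"
proof -
  have sm: "smooth (bump x y n)" for n using xy(1) by (rule smooth_bump)
  have ge: "\<And>n. Lam (bump x y n) x y = c0 * integral {x..y} (bump x y n)"
    using xy by (intro gen_eq sm bump_supp) auto
  have c1: "\<And>n r. r \<in> {x..y} \<Longrightarrow> r * bump x y n r * \<eta>' r = qq x y n r * \<eta>' r"
    using xy by (auto simp: bump_on)
  have c2: "\<And>n r. r \<in> {x..y} \<Longrightarrow> H r * bump x y n r = qq x y n r * (H r / r)"
    using xy by (auto simp: bump_on)
  have c3: "\<And>n r. r \<in> {x..y} \<Longrightarrow> bump x y n r = qq x y n r * (1 / r)"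
    using xy by (auto simp: bump_on)
  have cq: "continuous_on {x..y} (qq x y n)" for n by (rule smooth_cont[OF smooth_qq])
  have i1: "(\<lambda>r. qq x y n r * \<eta>' r) integrable_on {x..y}" for n
    using intg1[OF sm xy(1), of n y] integrable_cong[of "{x..y}"] c1 by (metis (no_types, lifting))
  have i2: "(\<lambda>r. qq x y n r * (H r / r)) integrable_on {x..y}" for n
    using xy by (intro integrable_continuous_interval continuous_intros cq cont_pos_fun)
  have i3: "(\<lambda>r. qq x y n r * (1 / r)) integrable_on {x..y}" for n
    using xy by (intro integrable_continuous_interval continuous_intros cq cont_pos_fun)
  have L1: "(\<lambda>n. integral {x..y} (\<lambda>r. qq x y n r * \<eta>' r)) \<longlonglongrightarrow> integral {x..y} \<eta>'"
    using xy by (intro qq_dct i1 etap_hk etap_abs)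
  have L2: "(\<lambda>n. integral {x..y} (\<lambda>r. qq x y n r * (H r / r))) \<longlonglongrightarrow> integral {x..y} (\<lambda>r. H r / r)"
    using xy by (intro qq_dct i2 integrable_continuous_interval continuous_intros cont_pos_fun)
  have L3: "(\<lambda>n. integral {x..y} (\<lambda>r. qq x y n r * (1 / r))) \<longlonglongrightarrow> integral {x..y} (\<lambda>r. 1 / r)"
    using xy by (intro qq_dct i3 integrable_continuous_interval continuous_intros cont_pos_fun)
  have eq: "integral {x..y} (\<lambda>r. qq x y n r * \<eta>' r) + integral {x..y} (\<lambda>r. qq x y n r * (H r / r))
      = c0 * integral {x..y} (\<lambda>r. qq x y n r * (1 / r))" for n
  proof -
    have "integral {x..y} (\<lambda>r. r * bump x y n r * \<eta>' r) = integral {x..y} (\<lambda>r. qq x y n r * \<eta>' r)"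
      by (rule integral_cong) (rule c1)
    moreover have "integral {x..y} (\<lambda>r. H r * bump x y n r) = integral {x..y} (\<lambda>r. qq x y n r * (H r / r))"
      by (rule integral_cong) (rule c2)
    moreover have "integral {x..y} (bump x y n) = integral {x..y} (\<lambda>r. qq x y n r * (1 / r))"
      by (rule integral_cong) (rule c3)
    ultimately show ?thesis using ge[of n] unfolding Lam_def by simp
  qed
  have "(\<lambda>n. integral {x..y} (\<lambda>r. qq x y n r * \<eta>' r) + integral {x..y} (\<lambda>r. qq x y n r * (H r / r)))
      \<longlonglongrightarrow> integral {x..y} \<eta>' + integral {x..y} (\<lambda>r. H r / r)"
    by (intro tendsto_add L1 L2)
  moreover have "(\<lambda>n. integral {x..y} (\<lambda>r. qq x y n r * \<eta>' r) + integral {x..y} (\<lambda>r. qq x y n r * (H r / r)))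
      \<longlonglongrightarrow> c0 * integral {x..y} (\<lambda>r. 1 / r)"
    unfolding eq by (intro tendsto_mult tendsto_const L3)
  ultimately show ?thesis by (rule LIMSEQ_unique)
qed

lemma eta_repr:
  assumes "0 < a" "a \<le> t"
  shows "\<eta> t = \<eta> a + c0 * integral {a..t} (\<lambda>r. 1 / r) - integral {a..t} (\<lambda>r. H r / r)"
proof (cases "a = t")
  case True then show ?thesis by simp
next
  case False
  then have "a < t" using assms by simp
  then show ?thesis using int_identity[of a t] eta_diff[of a t] assms by simp
qed

lemma eta_deriv:
  assumes r: "0 < r"
  shows "(\<eta> has_real_derivative (c0 - H r) / r) (at r)"
proof -
  let ?a = "r / 2"
  have a: "0 < ?a" "?a < r" using r by auto
  have d: "((\<lambda>t. \<eta> ?a + c0 * integral {?a..t} (\<lambda>r. 1 / r) - integral {?a..t} (\<lambda>r. H r / r))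
      has_real_derivative (0 + c0 * (1 / r) - H r / r)) (at r)"
  proof -
    have d1: "((\<lambda>u. integral {?a..u} (\<lambda>r. 1 / r)) has_real_derivative 1 / r) (at r)"
      by (rule integral_deriv_right'[OF cont_pos_fun(2)[OF a(1)] a(2)])
    have d2: "((\<lambda>u. integral {?a..u} (\<lambda>r. H r / r)) has_real_derivative H r / r) (at r)"
      by (rule integral_deriv_right'[OF cont_pos_fun(1)[OF a(1)] a(2)])
    show ?thesis by (intro DERIV_diff DERIV_add DERIV_const DERIV_cmult d1 d2)
  qed
  have "(c0 - H r) / r = 0 + c0 * (1 / r) - H r / r" by (simp add: diff_divide_distrib)
  with d have d': "((\<lambda>t. \<eta> ?a + c0 * integral {?a..t} (\<lambda>r. 1 / r) - integral {?a..t} (\<lambda>r. H r / r))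
      has_real_derivative (c0 - H r) / r) (at r)" by simp
  show ?thesis
  proof (rule has_field_derivative_transform_within_open[OF d', of "{?a<..}"])
    fix t assume "t \<in> {?a<..}"
    then have "0 < ?a" "?a \<le> t" using a by auto
    from eta_repr[OF this] show "\<eta> ?a + c0 * integral {?a..t} (\<lambda>r. 1 / r) - integral {?a..t} (\<lambda>r. H r / r) = \<eta> t"
      by simp
  qed (use a in auto)
qed

lemma p_deriv:
  assumes r: "0 < r"
  shows "((\<lambda>r. c0 - H r) has_real_derivative - (r * (W1 r + \<beta> / r\<^sup>2) * \<eta> r)) (at r)"
  using H_deriv[OF r] unfolding G_def by (auto intro!: derivative_eq_intros)

end


definition TT :: "real \<Rightarrow> real" where "TT r = (r\<^sup>2 - 8) / (r\<^sup>2 + 8)"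
definition SS :: "real \<Rightarrow> real" where "SS r = 32 * r\<^sup>2 / (r\<^sup>2 + 8)\<^sup>2"

lemma pos8: "0 < (r\<^sup>2 + 8::real)" by (simp add: add_nonneg_pos)

lemma TT_deriv: "(TT has_real_derivative 32 * r / (r\<^sup>2 + 8)\<^sup>2) (at r)"
proof -
  have ne: "r\<^sup>2 + 8 \<noteq> (0::real)" using pos8[of r] by linarith
  have "((\<lambda>r. (r\<^sup>2 - 8) / (r\<^sup>2 + 8)) has_real_derivative
      ((2 * r) * (r\<^sup>2 + 8) - (r\<^sup>2 - 8) * (2 * r)) / (r\<^sup>2 + 8)\<^sup>2) (at r)"
    using ne by (auto intro!: derivative_eq_intros simp: power2_eq_square)
  moreover have "((2 * r) * (r\<^sup>2 + 8) - (r\<^sup>2 - 8) * (2 * r)) = 32 * r" by (simp add: algebra_simps power2_eq_square)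
  ultimately show ?thesis unfolding TT_def[abs_def] by simp
qed

lemma SS_deriv: "(SS has_real_derivative 64 * r * (8 - r\<^sup>2) / (r\<^sup>2 + 8) ^ 3) (at r)"
proof -
  have ne: "r\<^sup>2 + 8 \<noteq> (0::real)" using pos8[of r] by linarith
  have "((\<lambda>r. 32 * r\<^sup>2 / (r\<^sup>2 + 8)\<^sup>2) has_real_derivative
      ((32 * (2 * r)) * (r\<^sup>2 + 8)\<^sup>2 - 32 * r\<^sup>2 * (2 * (r\<^sup>2 + 8) * (2 * r))) / ((r\<^sup>2 + 8)\<^sup>2)\<^sup>2) (at r)"
    using ne by (auto intro!: derivative_eq_intros simp: power2_eq_square)
  moreover have "((32 * (2 * r)) * (r\<^sup>2 + 8)\<^sup>2 - 32 * r\<^sup>2 * (2 * (r\<^sup>2 + 8) * (2 * r))) / ((r\<^sup>2 + 8)\<^sup>2)\<^sup>2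
      = 64 * r * (8 - r\<^sup>2) / (r\<^sup>2 + 8) ^ 3"
    using ne by (simp add: field_simps) algebra
  ultimately show ?thesis unfolding SS_def[abs_def] by simp
qed

lemma E_deriv: "0 < r \<Longrightarrow> ((\<lambda>r. r powr \<kappa>) has_real_derivative \<kappa> * r powr \<kappa> / r) (at r)"
  using has_real_derivative_powr[of r \<kappa>] by (simp add: powr_diff)

definition uu :: "real \<Rightarrow> real \<Rightarrow> real" where "uu \<kappa> r = r powr \<kappa> * (TT r - \<kappa>)"
definition vv :: "real \<Rightarrow> real \<Rightarrow> real" where "vv \<kappa> r = r powr \<kappa> * (\<kappa> * (TT r - \<kappa>) + SS r)"

lemma uu_deriv: "0 < r \<Longrightarrow> (uu \<kappa> has_real_derivative vv \<kappa> r / r) (at r)"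
proof -
  assume r: "0 < r"
  have "(uu \<kappa> has_real_derivative (\<kappa> * r powr \<kappa> / r) * (TT r - \<kappa>) + (32 * r / (r\<^sup>2 + 8)\<^sup>2 - 0) * r powr \<kappa>) (at r)"
    unfolding uu_def[abs_def] by (intro DERIV_mult E_deriv r DERIV_diff TT_deriv DERIV_const)
  moreover have "(\<kappa> * r powr \<kappa> / r) * (TT r - \<kappa>) + (32 * r / (r\<^sup>2 + 8)\<^sup>2 - 0) * r powr \<kappa> = vv \<kappa> r / r"
    using r by (simp add: vv_def SS_def field_simps power2_eq_square)
  ultimately show ?thesis by simp
qed

lemma vv_deriv: "0 < r \<Longrightarrow> (vv \<kappa> has_real_derivative - (r * (W1 r + (- \<kappa>\<^sup>2) / r\<^sup>2) * uu \<kappa> r)) (at r)"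
proof -
  assume r: "0 < r"
  have ne: "r\<^sup>2 + 8 \<noteq> (0::real)" using pos8[of r] by linarith
  have "(vv \<kappa> has_real_derivative (\<kappa> * r powr \<kappa> / r) * (\<kappa> * (TT r - \<kappa>) + SS r)
      + (\<kappa> * (32 * r / (r\<^sup>2 + 8)\<^sup>2 - 0) + 64 * r * (8 - r\<^sup>2) / (r\<^sup>2 + 8) ^ 3) * r powr \<kappa>) (at r)"
    unfolding vv_def[abs_def]
    by (intro DERIV_mult E_deriv r DERIV_add DERIV_cmult DERIV_diff TT_deriv DERIV_const SS_deriv)
  moreover have "(\<kappa> * r powr \<kappa> / r) * (\<kappa> * (TT r - \<kappa>) + SS r)
      + (\<kappa> * (32 * r / (r\<^sup>2 + 8)\<^sup>2 - 0) + 64 * r * (8 - r\<^sup>2) / (r\<^sup>2 + 8) ^ 3) * r powr \<kappa>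
      = - (r * (W1 r + (- \<kappa>\<^sup>2) / r\<^sup>2) * uu \<kappa> r)"
  proof -
    have a1: "32 * r / (r\<^sup>2 + 8)\<^sup>2 = r * W1 r / 2" by (simp add: W1_def add.commute)
    have aux: "D \<noteq> 0 \<Longrightarrow> 64 * r * (8 - x) / D ^ 3 = - (r * (64 / D\<^sup>2) * ((x - 8) / D))" for x D :: real
      by (simp add: field_simps power2_eq_square power3_eq_cube)
    have a2: "64 * r * (8 - r\<^sup>2) / (r\<^sup>2 + 8) ^ 3 = - (r * W1 r * TT r)"
      using aux[OF ne, of "r\<^sup>2"] by (simp add: W1_def TT_def add.commute)
    have a3: "SS r = r\<^sup>2 * W1 r / 2" by (simp add: W1_def SS_def add.commute)
    show ?thesis unfolding a1 a2 a3 uu_def using r by (simp add: field_simps power2_eq_square)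
  qed
  ultimately show ?thesis by simp
qed


definition solp :: "real \<Rightarrow> (real \<Rightarrow> real) \<Rightarrow> (real \<Rightarrow> real) \<Rightarrow> bool" where
  "solp \<beta> u v \<longleftrightarrow> (\<forall>r>0. (u has_real_derivative v r / r) (at r) \<and>
      (v has_real_derivative - (r * (W1 r + \<beta> / r\<^sup>2) * u r)) (at r))"

lemma solp_uu: "solp (- \<kappa>\<^sup>2) (uu \<kappa>) (vv \<kappa>)"
  unfolding solp_def using uu_deriv vv_deriv by simp

lemma solp_cmult: "solp \<beta> u v \<Longrightarrow> solp \<beta> (\<lambda>r. c * u r) (\<lambda>r. c * v r)"
  unfolding solp_def
proof (intro allI impI conjI)
  fix r :: real assume a: "\<forall>r>0. (u has_real_derivative v r / r) (at r) \<and>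
      (v has_real_derivative - (r * (W1 r + \<beta> / r\<^sup>2) * u r)) (at r)" and r: "0 < r"
  show "((\<lambda>r. c * u r) has_real_derivative c * v r / r) (at r)"
    using DERIV_cmult[of u "v r / r" r UNIV c] a r by simp
  from a r have dv: "(v has_real_derivative - (r * (W1 r + \<beta> / r\<^sup>2) * u r)) (at r)" by auto
  have e: "c * - (r * (W1 r + \<beta> / r\<^sup>2) * u r) = - (r * (W1 r + \<beta> / r\<^sup>2) * (c * u r))"
    by (simp add: algebra_simps)
  show "((\<lambda>r. c * v r) has_real_derivative - (r * (W1 r + \<beta> / r\<^sup>2) * (c * u r))) (at r)"
    by (subst e[symmetric]) (rule DERIV_cmult[OF dv])
qed

lemma wronski_const:
  assumes s1: "solp \<beta> u1 v1" and s2: "solp \<beta> u2 v2"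
  shows "\<exists>c. \<forall>r>0. u1 r * v2 r - u2 r * v1 r = c"
proof -
  have "\<exists>c. \<forall>r\<in>{0<..}. u1 r * v2 r - u2 r * v1 r = c"
  proof (rule has_field_derivative_zero_constant)
    show "convex {0::real<..}" by (rule convex_real_interval)
    fix r :: real assume "r \<in> {0<..}"
    then have r: "0 < r" by simp
    have d: "((\<lambda>r. u1 r * v2 r - u2 r * v1 r) has_real_derivative
        (v1 r / r * v2 r + - (r * (W1 r + \<beta> / r\<^sup>2) * u2 r) * u1 r)
      - (v2 r / r * v1 r + - (r * (W1 r + \<beta> / r\<^sup>2) * u1 r) * u2 r)) (at r)"
      using s1 s2 r unfolding solp_def by (intro DERIV_diff DERIV_mult) auto
    have "(v1 r / r * v2 r + - (r * (W1 r + \<beta> / r\<^sup>2) * u2 r) * u1 r)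
      - (v2 r / r * v1 r + - (r * (W1 r + \<beta> / r\<^sup>2) * u1 r) * u2 r) = 0"
      by (simp add: algebra_simps)
    with d show "((\<lambda>r. u1 r * v2 r - u2 r * v1 r) has_real_derivative 0) (at r within {0<..})"
      by (simp add: has_field_derivative_at_within)
  qed
  then show ?thesis by auto
qed

lemma span2:
  assumes s: "solp \<beta> \<eta> p" and s1: "solp \<beta> u1 v1" and s2: "solp \<beta> u2 v2"
    and w: "\<And>r. 0 < r \<Longrightarrow> u1 r * v2 r - u2 r * v1 r = w" and w0: "w \<noteq> 0"
  shows "\<exists>A B. \<forall>r>0. \<eta> r = A * u1 r + B * u2 r"
proof -
  obtain C2 where C2: "\<And>r. 0 < r \<Longrightarrow> \<eta> r * v2 r - u2 r * p r = C2" using wronski_const[OF s s2] by blast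
  obtain C1 where C1: "\<And>r. 0 < r \<Longrightarrow> \<eta> r * v1 r - u1 r * p r = C1" using wronski_const[OF s s1] by blast
  have "\<eta> r = (C2 / w) * u1 r + (- C1 / w) * u2 r" if r: "0 < r" for r
  proof -
    have "u1 r * C2 - u2 r * C1 = \<eta> r * w"
      unfolding C1[OF r, symmetric] C2[OF r, symmetric] w[OF r, symmetric] by (simp add: algebra_simps)
    then show ?thesis using w0 by (simp add: field_simps)
  qed
  then show ?thesis by blast
qed

lemma TT_sq: "(TT r)\<^sup>2 + SS r = 1"
proof -
  have ne: "r\<^sup>2 + 8 \<noteq> (0::real)" using pos8[of r] by linarith
  have "(r\<^sup>2 - 8)\<^sup>2 + 32 * r\<^sup>2 = (r\<^sup>2 + 8)\<^sup>2" by (simp add: algebra_simps power2_eq_square)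
  then show ?thesis using ne unfolding TT_def SS_def by (simp add: field_simps)
qed

lemma wronski_uu:
  assumes r: "0 < r"
  shows "uu k r * vv (-k) r - uu (-k) r * vv k r = 2 * k * (k\<^sup>2 - 1)"
proof -
  have p: "r powr k * r powr (-k) = 1" using r by (simp add: powr_add[symmetric])
  have "uu k r * vv (-k) r - uu (-k) r * vv k r =
      (r powr k * r powr (-k)) * ((TT r - k) * (- k * (TT r + k) + SS r) - (TT r + k) * (k * (TT r - k) + SS r))"
    by (simp add: uu_def vv_def algebra_simps)
  also have "\<dots> = - 2 * k * ((TT r)\<^sup>2 + SS r - k\<^sup>2)" unfolding p by (simp add: algebra_simps power2_eq_square)
  also have "\<dots> = - 2 * k * (1 - k\<^sup>2)" using TT_sq[of r] by simp
  also have "\<dots> = 2 * k * (k\<^sup>2 - 1)" by (simp add: algebra_simps)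
  finally show ?thesis .
qed

lemma frac3: "(b::real) \<noteq> 0 \<Longrightarrow> a / b - 1 + c / b\<^sup>2 = (a * b - b * b + c) / b\<^sup>2"
  by (simp add: field_simps power2_eq_square)

lemma aux2: "- (1/4) * (r * ((4 * (4 * (y - 8))) / B)) = 4 * r * (8 - y) / (B::real)"
proof -
  have "- (1/4) * (r * ((4 * (4 * (y - 8))) / B)) = (- (1/4) * (r * (4 * (4 * (y - 8))))) / B" by simp
  also have "- (1/4) * (r * (4 * (4 * (y - 8)))) = 4 * r * (8 - y)" by (simp add: algebra_simps)
  finally show ?thesis .
qed

definition u1e :: "real \<Rightarrow> real" where "u1e r = - (1/4) * uu 1 r"
definition v1e :: "real \<Rightarrow> real" where "v1e r = - (1/4) * vv 1 r"

lemma solp_1: "solp (-1) u1e v1e"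
  using solp_cmult[OF solp_uu[of 1], of "- (1/4)"] unfolding u1e_def[abs_def] v1e_def[abs_def] by simp

lemma u1e_eta1: "0 < r \<Longrightarrow> u1e r = eta1 r"
proof -
  assume r: "0 < r"
  have ne: "r\<^sup>2 + 8 \<noteq> (0::real)" using pos8[of r] by linarith
  show ?thesis using r ne by (simp add: u1e_def uu_def TT_def eta1_def field_simps add.commute)
qed

lemma v1e_eq: "0 < r \<Longrightarrow> v1e r = 4 * r * (8 - r\<^sup>2) / (r\<^sup>2 + 8)\<^sup>2"
proof -
  assume r: "0 < r"
  have ne: "r\<^sup>2 + 8 \<noteq> (0::real)" using pos8[of r] by linarith
  have "v1e r = - (1/4) * (r * ((r\<^sup>2 - 8) / (r\<^sup>2 + 8) - 1 + 32 * r\<^sup>2 / (r\<^sup>2 + 8)\<^sup>2))"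
    using r by (simp add: v1e_def vv_def TT_def SS_def)
  also have "\<dots> = 4 * r * (8 - r\<^sup>2) / (r\<^sup>2 + 8)\<^sup>2"
  proof -
    have n: "(r\<^sup>2 - 8) * (r\<^sup>2 + 8) - (r\<^sup>2 + 8) * (r\<^sup>2 + 8) + 32 * r\<^sup>2 = 4 * (4 * (r\<^sup>2 - 8))"
      by (simp add: algebra_simps power2_eq_square)
    show ?thesis unfolding frac3[OF ne] n aux2 ..
  qed
  finally show ?thesis .
qed

definition LL :: "real \<Rightarrow> real" where "LL r = - 2 / r\<^sup>2 + ln r + r\<^sup>2 / 32"
definition u2e :: "real \<Rightarrow> real" where "u2e r = u1e r * LL r"
definition v2e :: "real \<Rightarrow> real" where "v2e r = v1e r * LL r + (r / 4 + 2 / r)"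

lemma LL_deriv: "0 < r \<Longrightarrow> (LL has_real_derivative (r\<^sup>2 + 8)\<^sup>2 / (16 * r ^ 3)) (at r)"
proof -
  assume r: "0 < r"
  have "(LL has_real_derivative (- (- 2 * (2 * r) / (r\<^sup>2)\<^sup>2) + 1 / r + 2 * r / 32)) (at r)"
    unfolding LL_def[abs_def] using r
    by (auto intro!: derivative_eq_intros simp: power2_eq_square)
  moreover have "(- (- 2 * (2 * r) / (r\<^sup>2)\<^sup>2) + 1 / r + 2 * r / 32) = (r\<^sup>2 + 8)\<^sup>2 / (16 * r ^ 3)"
    using r by (simp add: field_simps power2_eq_square power3_eq_cube power4_eq_xxxx)
  ultimately show ?thesis by simp
qed

lemma solp_2: "solp (-1) u2e v2e"
  unfolding solp_def
proof (intro allI impI conjI)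
  fix r :: real assume r: "0 < r"
  have ne: "r\<^sup>2 + 8 \<noteq> (0::real)" using pos8[of r] by linarith
  have d1: "(u1e has_real_derivative v1e r / r) (at r)" and d1': "(v1e has_real_derivative - (r * (W1 r + (-1) / r\<^sup>2) * u1e r)) (at r)"
    using solp_1 r unfolding solp_def by auto
  have dL: "(LL has_real_derivative (r\<^sup>2 + 8)\<^sup>2 / (16 * r ^ 3)) (at r)" by (rule LL_deriv[OF r])
  have k1: "u1e r * ((r\<^sup>2 + 8)\<^sup>2 / (16 * r ^ 3)) = (r / 4 + 2 / r) / r"
  proof -
    have "(4 * r / (r\<^sup>2 + 8)) * ((r\<^sup>2 + 8)\<^sup>2 / (16 * r ^ 3)) = (r\<^sup>2 + 8) / (4 * r\<^sup>2)"
      using r ne by (simp add: power2_eq_square power3_eq_cube; simp add: field_simps)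
    also have "\<dots> = (r / 4 + 2 / r) / r" using r by (simp add: field_simps power2_eq_square)
    finally show ?thesis using r by (simp add: u1e_eta1 eta1_def add.commute)
  qed
  have k2: "v1e r * ((r\<^sup>2 + 8)\<^sup>2 / (16 * r ^ 3)) = 2 / r\<^sup>2 - 1 / 4"
  proof -
    have "(4 * r * (8 - r\<^sup>2) / (r\<^sup>2 + 8)\<^sup>2) * ((r\<^sup>2 + 8)\<^sup>2 / (16 * r ^ 3)) = (8 - r\<^sup>2) / (4 * r\<^sup>2)"
      using r ne by (simp add: power2_eq_square power3_eq_cube; simp add: field_simps)
    also have "\<dots> = 2 / r\<^sup>2 - 1 / 4" using r by (simp add: field_simps power2_eq_square)
    finally show ?thesis using r by (simp add: v1e_eq)
  qed
  have "(u2e has_real_derivative v1e r / r * LL r + (r\<^sup>2 + 8)\<^sup>2 / (16 * r ^ 3) * u1e r) (at r)"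
    unfolding u2e_def[abs_def] by (intro DERIV_mult d1 dL)
  moreover have "v1e r / r * LL r + (r\<^sup>2 + 8)\<^sup>2 / (16 * r ^ 3) * u1e r = v2e r / r"
  proof -
    have e1: "v1e r / r * LL r = v1e r * LL r / r" by simp
    have k1': "(r\<^sup>2 + 8)\<^sup>2 / (16 * r ^ 3) * u1e r = (r / 4 + 2 / r) / r" using k1 by (simp only: mult.commute)
    show ?thesis unfolding e1 k1' v2e_def by (simp only: add_divide_distrib)
  qed
  ultimately show "(u2e has_real_derivative v2e r / r) (at r)" by simp
  have "((\<lambda>r. r / 4 + 2 / r) has_real_derivative 1 / 4 - 2 / r\<^sup>2) (at r)"
    using r by (auto intro!: derivative_eq_intros simp: power2_eq_square field_simps)
  then have "(v2e has_real_derivative (- (r * (W1 r + (-1) / r\<^sup>2) * u1e r) * LL r + (r\<^sup>2 + 8)\<^sup>2 / (16 * r ^ 3) * v1e r)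
      + (1 / 4 - 2 / r\<^sup>2)) (at r)"
    unfolding v2e_def[abs_def] by (intro DERIV_add DERIV_mult d1' dL)
  moreover have "(- (r * (W1 r + (-1) / r\<^sup>2) * u1e r) * LL r + (r\<^sup>2 + 8)\<^sup>2 / (16 * r ^ 3) * v1e r)
      + (1 / 4 - 2 / r\<^sup>2) = - (r * (W1 r + (-1) / r\<^sup>2) * u2e r)"
    using k2 by (simp add: u2e_def algebra_simps)
  ultimately show "(v2e has_real_derivative - (r * (W1 r + (-1) / r\<^sup>2) * u2e r)) (at r)" by simp
qed

lemma wronski_1: "0 < r \<Longrightarrow> u1e r * v2e r - u2e r * v1e r = 1"
proof -
  assume r: "0 < r"
  have ne: "r\<^sup>2 + 8 \<noteq> (0::real)" using pos8[of r] by linarith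
  have "u1e r * v2e r - u2e r * v1e r = u1e r * (r / 4 + 2 / r)"
    by (simp add: u2e_def v2e_def algebra_simps)
  also have "\<dots> = 1"
  proof -
    have "r / 4 + 2 / r = (r\<^sup>2 + 8) / (4 * r)" using r by (simp add: field_simps power2_eq_square)
    then show ?thesis using r ne by (simp add: u1e_eta1 eta1_def add.commute)
  qed
  finally show ?thesis .
qed


lemma powr_at_top: assumes k: "0 < k" shows "filterlim (\<lambda>r::real. r powr k) at_top at_top"
  unfolding filterlim_at_top
proof
  fix Z :: real
  define Z' where "Z' = max Z 1"
  have "\<forall>\<^sub>F r in at_top. Z' powr (1 / k) \<le> r" by (rule eventually_ge_at_top)
  then show "\<forall>\<^sub>F r in at_top. Z \<le> r powr k"
  proof (rule eventually_mono)
    fix r assume r: "Z' powr (1 / k) \<le> r"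
    have "Z' = (Z' powr (1 / k)) powr k" using k by (simp add: powr_powr Z'_def)
    also have "\<dots> \<le> r powr k" using r k by (intro powr_mono2) auto
    finally show "Z \<le> r powr k" unfolding Z'_def by simp
  qed
qed

lemma powr_neg_at_zero: assumes k: "0 < k" shows "filterlim (\<lambda>r::real. r powr (-k)) at_top (at_right 0)"
proof -
  have "filterlim (\<lambda>r::real. (inverse r) powr k) at_top (at_right 0)"
    by (rule filterlim_compose[OF powr_at_top[OF k] filterlim_inverse_at_top_right])
  moreover have "\<forall>\<^sub>F r in at_right 0. (inverse r) powr k = r powr (-k)"
    by (rule eventually_mono[OF eventually_at_right_less]) (simp add: powr_minus inverse_powr)
  moreover note filterlim_cong[OF refl refl calculation(2)]
  ultimately show ?thesis by simp
qed

lemma big_prod: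
  fixes f g :: "'a \<Rightarrow> real"
  assumes f: "filterlim f at_top F" and g: "(g \<longlongrightarrow> c) F" and c: "c \<noteq> 0"
  shows "\<forall>\<^sub>F r in F. 1 \<le> \<bar>f r * g r\<bar>"
proof -
  have "\<forall>\<^sub>F r in F. \<bar>c\<bar> / 2 < \<bar>g r\<bar>"
    using tendsto_rabs[OF g] c by (intro order_tendstoD(1)) auto
  moreover have "\<forall>\<^sub>F r in F. 2 / \<bar>c\<bar> \<le> f r"
    using f unfolding filterlim_at_top by auto
  ultimately show ?thesis
  proof eventually_elim
    case (elim r)
    have "1 = (2 / \<bar>c\<bar>) * (\<bar>c\<bar> / 2)" using c by simp
    also have "\<dots> \<le> \<bar>f r\<bar> * \<bar>g r\<bar>"
      using elim c by (intro mult_mono) auto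
    finally show ?case by (simp add: abs_mult)
  qed
qed

lemma TT_top: "(TT \<longlongrightarrow> 1) at_top"
  unfolding TT_def[abs_def] by real_asymp

lemma TT_zero: "(TT \<longlongrightarrow> -1) (at_right 0)"
  unfolding TT_def[abs_def] by real_asymp

lemma asym_top:
  assumes k: "0 < k" "k \<noteq> 1" and A: "A \<noteq> 0"
  shows "\<forall>\<^sub>F r in at_top. 1 \<le> \<bar>A * uu k r + B * uu (-k) r\<bar>"
proof -
  have g: "((\<lambda>r. A * (TT r - k) + B * (r powr (- (2 * k)) * (TT r + k))) \<longlongrightarrow> A * (1 - k) + B * (0 * (1 + k))) at_top"
    by (intro tendsto_intros TT_top tendsto_neg_powr filterlim_ident) (use k in auto)
  have "\<forall>\<^sub>F r in at_top. 1 \<le> \<bar>r powr k * (A * (TT r - k) + B * (r powr (- (2 * k)) * (TT r + k)))\<bar>"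
    by (rule big_prod[OF powr_at_top[OF k(1)] g]) (use k A in auto)
  moreover have "\<forall>\<^sub>F r in at_top. r powr k * (A * (TT r - k) + B * (r powr (- (2 * k)) * (TT r + k))) = A * uu k r + B * uu (-k) r"
  proof (rule eventually_mono[OF eventually_gt_at_top[of 0]])
    fix r :: real assume r: "0 < r"
    have "r powr k * r powr (- (2 * k)) = r powr (-k)" using r by (simp add: powr_add[symmetric])
    then show "r powr k * (A * (TT r - k) + B * (r powr (- (2 * k)) * (TT r + k))) = A * uu k r + B * uu (-k) r"
      unfolding uu_def by (simp add: algebra_simps)
  qed
  ultimately show ?thesis by eventually_elim simp
qed

lemma asym_zero:
  assumes k: "0 < k" "k \<noteq> 1" and B: "B \<noteq> 0"
  shows "\<forall>\<^sub>F r in at_right 0. 1 \<le> \<bar>A * uu k r + B * uu (-k) r\<bar>"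
proof -
  have p0: "((\<lambda>r. r powr (2 * k)) \<longlongrightarrow> 0) (at_right (0::real))"
    by (intro tendsto_zero_powrI[where b="2*k"] tendsto_ident_at tendsto_const)
       (use k in \<open>auto simp: eventually_at_right_less eventually_mono[OF eventually_at_right_less]\<close>)
  have g: "((\<lambda>r. B * (TT r + k) + A * (r powr (2 * k) * (TT r - k))) \<longlongrightarrow> B * (-1 + k) + A * (0 * (-1 - k))) (at_right 0)"
    by (intro tendsto_intros TT_zero p0)
  have "\<forall>\<^sub>F r in at_right 0. 1 \<le> \<bar>r powr (-k) * (B * (TT r + k) + A * (r powr (2 * k) * (TT r - k)))\<bar>"
    by (rule big_prod[OF powr_neg_at_zero[OF k(1)] g]) (use k B in auto)
  moreover have "\<forall>\<^sub>F r in at_right 0. r powr (-k) * (B * (TT r + k) + A * (r powr (2 * k) * (TT r - k))) = A * uu k r + B * uu (-k) r"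
  proof (rule eventually_mono[OF eventually_at_right_less])
    fix r :: real assume r: "0 < r"
    have "r powr (-k) * r powr (2 * k) = r powr k" using r by (simp add: powr_add[symmetric])
    then show "r powr (-k) * (B * (TT r + k) + A * (r powr (2 * k) * (TT r - k))) = A * uu k r + B * uu (-k) r"
      unfolding uu_def by (simp add: algebra_simps)
  qed
  ultimately show ?thesis by eventually_elim simp
qed


lemma asym_1:
  assumes b: "b \<noteq> 0"
  shows "\<forall>\<^sub>F r in at_top. 1 \<le> \<bar>a * u1e r + b * u2e r\<bar>"
proof -
  have l1: "((\<lambda>r::real. 4 / (8 + r\<^sup>2)) \<longlongrightarrow> 0) at_top" by real_asymp
  have l2: "((\<lambda>r::real. 4 * LL r / (8 + r\<^sup>2)) \<longlongrightarrow> 1/8) at_top" unfolding LL_def by real_asymp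
  have g: "((\<lambda>r. a * (4 / (8 + r\<^sup>2)) + b * (4 * LL r / (8 + r\<^sup>2))) \<longlongrightarrow> a * 0 + b * (1/8)) at_top"
    by (intro tendsto_intros l1 l2)
  have "\<forall>\<^sub>F r in at_top. 1 \<le> \<bar>r * (a * (4 / (8 + r\<^sup>2)) + b * (4 * LL r / (8 + r\<^sup>2)))\<bar>"
    by (rule big_prod[OF filterlim_ident g]) (use b in auto)
  moreover have "\<forall>\<^sub>F r in at_top. r * (a * (4 / (8 + r\<^sup>2)) + b * (4 * LL r / (8 + r\<^sup>2))) = a * u1e r + b * u2e r"
  proof (rule eventually_mono[OF eventually_gt_at_top[of 0]])
    fix r :: real assume r: "0 < r"
    show "r * (a * (4 / (8 + r\<^sup>2)) + b * (4 * LL r / (8 + r\<^sup>2))) = a * u1e r + b * u2e r"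
      using r by (simp add: u2e_def u1e_eta1 eta1_def algebra_simps)
  qed
  ultimately show ?thesis by eventually_elim simp
qed

lemma LINT_sub_le:
  fixes g :: "real \<Rightarrow> real"
  assumes si: "set_integrable lborel S g" and A: "A \<subseteq> S" "A \<in> sets lborel" and nn: "\<And>x. x \<in> S \<Longrightarrow> 0 \<le> g x"
  shows "(LINT x:A|lborel. g x) \<le> (LINT x:S|lborel. g x)"
proof -
  have siA: "set_integrable lborel A g" by (rule set_integrable_subset[OF si A(2) A(1)])
  show ?thesis
    unfolding set_lebesgue_integral_def
    using siA si unfolding set_integrable_def
    by (intro integral_mono) (use A nn in \<open>auto simp: indicator_def\<close>)
qed

lemma int_inv: "0 < (a::real) \<Longrightarrow> a \<le> b \<Longrightarrow> integral {a..b} (\<lambda>r. 1 / r) = ln b - ln a"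
proof -
  assume ab: "0 < a" "a \<le> b"
  have "((\<lambda>r. 1 / r) has_integral (ln b - ln a)) {a..b}"
  proof (rule fundamental_theorem_of_calculus[where f=ln])
    show "a \<le> b" by (rule ab(2))
    fix x assume "x \<in> {a..b}"
    then have "0 < x" using ab by auto
    then show "(ln has_vector_derivative 1 / x) (at x within {a..b})"
      by (auto intro!: derivative_eq_intros simp: has_real_derivative_iff_has_vector_derivative[symmetric] has_field_derivative_at_within)
  qed
  then show ?thesis by (rule integral_unique)
qed

lemma noint_core:
  fixes f :: "real \<Rightarrow> real"
  assumes si: "set_integrable lborel {0<..} (\<lambda>r. (f r)\<^sup>2 / r)"
    and R: "0 < R" "R \<le> X" and big: "\<And>r. r \<in> {R..X} \<Longrightarrow> 1 \<le> \<bar>f r\<bar>"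
  shows "ln X - ln R \<le> (LINT r:{0<..}|lborel. (f r)\<^sup>2 / r)"
proof -
  have siA: "set_integrable lborel {R..X} (\<lambda>r. (f r)\<^sup>2 / r)"
    by (rule set_integrable_subset[OF si]) (use R in auto)
  have "ln X - ln R = integral {R..X} (\<lambda>r. 1 / r)" using int_inv[OF R(1) R(2)] by simp
  also have "\<dots> \<le> integral {R..X} (\<lambda>r. (f r)\<^sup>2 / r)"
  proof (rule integral_le)
    show "(\<lambda>r. 1 / r) integrable_on {R..X}"
      using R by (intro integrable_continuous_interval continuous_intros) auto
    show "(\<lambda>r. (f r)\<^sup>2 / r) integrable_on {R..X}" using set_borel_integral_eq_integral(1)[OF siA] .
    fix r assume r: "r \<in> {R..X}"
    then have "1 \<le> (f r)\<^sup>2" using big[OF r] by (metis abs_le_square_iff abs_one one_power2)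
    moreover have "0 < r" using r R by auto
    ultimately show "1 / r \<le> (f r)\<^sup>2 / r" by (simp add: divide_right_mono)
  qed
  also have "\<dots> = (LINT r:{R..X}|lborel. (f r)\<^sup>2 / r)" using set_borel_integral_eq_integral(2)[OF siA] by simp
  also have "\<dots> \<le> (LINT r:{0<..}|lborel. (f r)\<^sup>2 / r)"
    by (rule LINT_sub_le[OF si]) (use R in auto)
  finally show ?thesis .
qed

lemma noint_top:
  fixes f :: "real \<Rightarrow> real"
  assumes si: "set_integrable lborel {0<..} (\<lambda>r. (f r)\<^sup>2 / r)"
    and ev: "\<forall>\<^sub>F r in at_top. 1 \<le> \<bar>f r\<bar>"
  shows False
proof -
  obtain R0 where R0: "\<And>r. R0 \<le> r \<Longrightarrow> 1 \<le> \<bar>f r\<bar>" using ev unfolding eventually_at_top_linorder by blast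
  define R where "R = max R0 1"
  define M where "M = (LINT r:{0<..}|lborel. (f r)\<^sup>2 / r)"
  define X where "X = R * exp (\<bar>M\<bar> + 1)"
  have R1: "0 < R" by (simp add: R_def)
  have "1 \<le> exp (\<bar>M\<bar> + 1)" by simp
  then have "R * 1 \<le> X" unfolding X_def using R1 by (intro mult_left_mono) auto
  then have R: "0 < R" "R \<le> X" using R1 by auto
  have "ln X - ln R \<le> M" unfolding M_def
    by (rule noint_core[OF si R]) (use R0 in \<open>auto simp: R_def\<close>)
  moreover have "ln X = ln R + (\<bar>M\<bar> + 1)" using R1 unfolding X_def by (simp add: ln_mult)
  ultimately show False by simp
qed

lemma noint_zero:
  fixes f :: "real \<Rightarrow> real"
  assumes si: "set_integrable lborel {0<..} (\<lambda>r. (f r)\<^sup>2 / r)"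
    and ev: "\<forall>\<^sub>F r in at_right 0. 1 \<le> \<bar>f r\<bar>"
  shows False
proof -
  obtain d where d: "0 < d" "\<And>r. 0 < r \<Longrightarrow> r < d \<Longrightarrow> 1 \<le> \<bar>f r\<bar>"
    using ev unfolding eventually_at_right_field by auto
  define Y where "Y = d / 2"
  define M where "M = (LINT r:{0<..}|lborel. (f r)\<^sup>2 / r)"
  define R where "R = Y * exp (- (\<bar>M\<bar> + 1))"
  have R: "0 < R" "R \<le> Y" using d unfolding R_def Y_def by (auto simp: mult_le_cancel_left1)
  have "ln Y - ln R \<le> M" unfolding M_def
    by (rule noint_core[OF si R]) (use d R in \<open>auto simp: Y_def\<close>)
  moreover have "ln R = ln Y + (- (\<bar>M\<bar> + 1))"
    using d unfolding R_def by (subst ln_mult) (auto simp: Y_def)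
  ultimately show False by simp
qed


definition ep :: "real \<Rightarrow> real" where "ep r = 4 * (8 - r\<^sup>2) / (8 + r\<^sup>2)\<^sup>2"

lemma pos8': "0 < (8 + r\<^sup>2::real)" by (simp add: add_pos_nonneg)

lemma eta1_deriv: "(eta1 has_real_derivative ep r) (at r)"
proof -
  have ne: "8 + r\<^sup>2 \<noteq> (0::real)" using pos8'[of r] by linarith
  have "(eta1 has_real_derivative (4 * (8 + r\<^sup>2) - 4 * r * (2 * r)) / (8 + r\<^sup>2)\<^sup>2) (at r)"
    unfolding eta1_def[abs_def] using ne by (auto intro!: derivative_eq_intros simp: power2_eq_square)
  moreover have "(4 * (8 + r\<^sup>2) - 4 * r * (2 * r)) = 4 * (8 - r\<^sup>2)" by (simp add: algebra_simps power2_eq_square)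
  ultimately show ?thesis by (simp add: ep_def)
qed

lemma cont_ep: "continuous_on S ep"
proof -
  have "\<And>r. (8 + r\<^sup>2::real)\<^sup>2 \<noteq> 0" using pos8' by (metis less_irrefl power_not_zero)
  then show ?thesis unfolding ep_def[abs_def] by (intro continuous_intros) auto
qed

lemma cont_eta1: "continuous_on S eta1"
  unfolding eta1_def[abs_def] using pos8' by (intro continuous_intros) (metis less_irrefl)

lemma weak_deriv_eta1: "weak_deriv eta1 ep"
  unfolding weak_deriv_def
proof (intro allI impI conjI)
  fix a b :: real assume ab: "0 < a" "a \<le> b"
  show si: "set_integrable lborel {a..b} ep" by (intro borel_integrable_atLeastAtMost' cont_ep)
  have "(ep has_integral (eta1 b - eta1 a)) {a..b}"
    by (rule fundamental_theorem_of_calculus[OF ab(2)])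
       (auto intro: has_field_derivative_at_within simp: has_real_derivative_iff_has_vector_derivative[symmetric] eta1_deriv)
  then show "eta1 b - eta1 a = (LINT t:{a..b}|lborel. ep t)"
    using set_borel_integral_eq_integral(2)[OF si] by (simp add: integral_unique)
qed

lemma int_base: "set_integrable lborel {0<..} (\<lambda>r::real. 16 * r / (8 + r\<^sup>2)\<^sup>2)"
proof -
  have "set_integrable lborel (einterval 0 \<infinity>) (\<lambda>r. 16 * r / (8 + r\<^sup>2)\<^sup>2)"
  proof (rule interval_integral_FTC_nonneg(1)[where F="\<lambda>r. - 8 / (8 + r\<^sup>2)" and A="-1" and B=0])
    show "(0::ereal) < \<infinity>" by simp
    fix x :: real
    have ne: "8 + x\<^sup>2 \<noteq> (0::real)" using pos8'[of x] by linarith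
    show "((\<lambda>r. - 8 / (8 + r\<^sup>2)) has_real_derivative 16 * x / (8 + x\<^sup>2)\<^sup>2) (at x)"
      using ne by (auto intro!: derivative_eq_intros simp: power2_eq_square field_simps)
    show "isCont (\<lambda>r. 16 * r / (8 + r\<^sup>2)\<^sup>2) x"
      using ne by (intro continuous_intros) auto
  next
    show "AE x in lborel. 0 < ereal x \<longrightarrow> ereal x < \<infinity> \<longrightarrow> 0 \<le> 16 * x / (8 + x\<^sup>2)\<^sup>2"
      by (intro AE_I2) auto
    show "(((\<lambda>r. - 8 / (8 + r\<^sup>2)) \<circ> real_of_ereal) \<longlongrightarrow> -1) (at_right 0)"
      unfolding zero_ereal_def ereal_tendsto_simps by real_asymp
    show "(((\<lambda>r. - 8 / (8 + r\<^sup>2)) \<circ> real_of_ereal) \<longlongrightarrow> 0) (at_left \<infinity>)"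
      unfolding ereal_tendsto_simps by real_asymp
  qed
  then show ?thesis by (simp add: zero_ereal_def)
qed

lemma meas_cont: fixes f :: "real \<Rightarrow> real" shows "continuous_on UNIV f \<Longrightarrow> set_borel_measurable lborel {0<..} f"
proof -
  assume "continuous_on UNIV f"
  then have "f \<in> borel_measurable borel" by (rule borel_measurable_continuous_onI)
  show ?thesis unfolding set_borel_measurable_def
    using borel_measurable_continuous_on_indicator[of "{0<..}" f] \<open>continuous_on UNIV f\<close>
    by (auto intro: continuous_on_subset)
qed

lemma Drad_eta1: "Drad eta1 ep"
  unfolding Drad_def
proof (intro conjI weak_deriv_eta1)
  show "set_integrable lborel {0<..} (\<lambda>r. r * (ep r)\<^sup>2)"
  proof (rule set_integrable_bound[OF int_base])
    show "set_borel_measurable lborel {0<..} (\<lambda>r. r * (ep r)\<^sup>2)"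
      by (intro meas_cont continuous_intros cont_ep)
    show "AE x in lborel. x \<in> {0<..} \<longrightarrow> norm (x * (ep x)\<^sup>2) \<le> norm (16 * x / (8 + x\<^sup>2)\<^sup>2)"
    proof (intro AE_I2 impI)
      fix x :: real assume "x \<in> {0<..}"
      then have x: "0 < x" by simp
      have p: "0 < 8 + x\<^sup>2" by (rule pos8')
      have "\<bar>8 - x\<^sup>2\<bar> \<le> 8 + x\<^sup>2" using zero_le_power2[of x] by (simp add: abs_le_iff)
      then have "4 * \<bar>8 - x\<^sup>2\<bar> / (8 + x\<^sup>2)\<^sup>2 \<le> 4 * (8 + x\<^sup>2) / (8 + x\<^sup>2)\<^sup>2"
        using p by (intro divide_right_mono) auto
      also have "\<dots> = 4 / (8 + x\<^sup>2)"
      proof -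
        have aux: "\<And>D::real. 0 < D \<Longrightarrow> 4 * D / D\<^sup>2 = 4 / D" by (simp add: power2_eq_square)
        show ?thesis using aux[OF p] .
      qed
      finally have c1: "4 * \<bar>8 - x\<^sup>2\<bar> / (8 + x\<^sup>2)\<^sup>2 \<le> 4 / (8 + x\<^sup>2)" .
      have "\<bar>ep x\<bar> = 4 * \<bar>8 - x\<^sup>2\<bar> / (8 + x\<^sup>2)\<^sup>2"
        by (simp only: ep_def abs_divide abs_mult abs_numeral abs_power2)
      with c1 have e: "\<bar>ep x\<bar> \<le> 4 / (8 + x\<^sup>2)" by simp
      have "(ep x)\<^sup>2 \<le> (4 / (8 + x\<^sup>2))\<^sup>2"
        using power_mono[OF e abs_ge_zero, of 2] by simp
      then have "x * (ep x)\<^sup>2 \<le> x * (4 / (8 + x\<^sup>2))\<^sup>2" using x by (intro mult_left_mono) auto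
      moreover have "x * (4 / (8 + x\<^sup>2))\<^sup>2 = 16 * x / (8 + x\<^sup>2)\<^sup>2" by (simp add: power_divide)
      moreover have "0 \<le> x * (ep x)\<^sup>2" using x by simp
      ultimately show "norm (x * (ep x)\<^sup>2) \<le> norm (16 * x / (8 + x\<^sup>2)\<^sup>2)" using x by simp
    qed
  qed
  have "(\<lambda>r. (eta1 r)\<^sup>2 / r) = (\<lambda>r. 16 * r / (8 + r\<^sup>2)\<^sup>2)"
  proof
    fix r :: real
    show "(eta1 r)\<^sup>2 / r = 16 * r / (8 + r\<^sup>2)\<^sup>2"
      by (cases "r = 0") (simp_all add: eta1_def power_divide power2_eq_square)
  qed
  then show "set_integrable lborel {0<..} (\<lambda>r. (eta1 r)\<^sup>2 / r)" using int_base by simp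
qed


lemma W1_cont2: "continuous_on S W1"
proof -
  have "\<And>r. (8 + r\<^sup>2::real)\<^sup>2 \<noteq> 0" using pos8' by (metis less_irrefl power_not_zero)
  then show ?thesis unfolding W1_def[abs_def] by (intro continuous_intros) auto
qed

lemma v1e_ep: "0 < r \<Longrightarrow> v1e r = r * ep r"
  by (simp add: v1e_eq ep_def add.commute)

lemma deriv_zero_outside:
  fixes \<phi> :: "real \<Rightarrow> real"
  assumes z: "\<And>x. x \<notin> {a..b} \<Longrightarrow> \<phi> x = 0" and x: "x \<notin> {a..b}"
  shows "deriv \<phi> x = 0"
proof -
  have d0: "((\<lambda>x. 0) has_real_derivative 0) (at x)" by simp
  have "(\<phi> has_real_derivative 0) (at x)"
    by (rule has_field_derivative_transform_within_open[OF d0, of "- {a..b}"]) (use z x in auto)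
  then show ?thesis by (rule DERIV_imp_deriv)
qed

lemma ws_eta1: "weak_solution (-1) eta1 ep"
  unfolding weak_solution_def
proof (intro allI impI)
  fix \<phi> :: "real \<Rightarrow> real"
  assume tf: "test_fun \<phi>"
  obtain a b where ab: "0 < a" "a \<le> b" and z: "\<And>x. x \<notin> {a..b} \<Longrightarrow> \<phi> x = 0"
    using tf unfolding test_fun_def by blast
  have dphi: "\<phi> differentiable (at x)" for x
    using tf unfolding test_fun_def by (metis funpow_0)
  have ddphi: "deriv \<phi> differentiable (at x)" for x
    using tf unfolding test_fun_def by (metis funpow_0 funpow_Suc_right o_apply One_nat_def funpow.simps(2))
  have cphi: "continuous_on S \<phi>" for S
    using dphi by (intro continuous_at_imp_continuous_on ballI differentiable_imp_continuous_within)
  have cdphi: "continuous_on S (deriv \<phi>)" for S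
    using ddphi by (intro continuous_at_imp_continuous_on ballI differentiable_imp_continuous_within)
  have dz: "\<And>x. x \<notin> {a..b} \<Longrightarrow> deriv \<phi> x = 0" by (rule deriv_zero_outside[OF z])
  define a' where "a' = a / 2"
  define b' where "b' = b + 1"
  have a'b': "0 < a'" "a' \<le> b'" "a' < a" "b < b'" using ab by (auto simp: a'_def b'_def)
  define D1 where "D1 = (\<lambda>r. - (r * (W1 r + (-1) / r\<^sup>2) * u1e r))"
  have sp: "\<And>r. 0 < r \<Longrightarrow> (u1e has_real_derivative v1e r / r) (at r) \<and> (v1e has_real_derivative D1 r) (at r)"
    using solp_1 unfolding solp_def D1_def by auto
  have cv: "continuous_on {a'..b'} v1e"
    using sp a'b' by (intro continuous_at_imp_continuous_on ballI) (meson DERIV_isCont atLeastAtMost_iff less_le_trans)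
  have e1: "(\<lambda>r. indicator {0<..} r *\<^sub>R (r * ep r * deriv \<phi> r)) = (\<lambda>r. indicator {a'..b'} r *\<^sub>R (v1e r * deriv \<phi> r))"
  proof
    fix r :: real
    show "indicator {0<..} r *\<^sub>R (r * ep r * deriv \<phi> r) = indicator {a'..b'} r *\<^sub>R (v1e r * deriv \<phi> r)"
    proof (cases "r \<in> {a..b}")
      case True then show ?thesis using a'b' by (auto simp: indicator_def v1e_ep)
    next
      case False then show ?thesis by (simp add: dz)
    qed
  qed
  have si1: "set_integrable lborel {a'..b'} (\<lambda>r. v1e r * deriv \<phi> r)"
    by (intro borel_integrable_atLeastAtMost' continuous_intros cv cdphi)
  have L: "(LINT r:{0<..}|lborel. r * ep r * deriv \<phi> r) = integral {a'..b'} (\<lambda>r. v1e r * deriv \<phi> r)"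
    unfolding set_lebesgue_integral_def e1
    using set_borel_integral_eq_integral(2)[OF si1] unfolding set_lebesgue_integral_def by simp
  have e2: "(\<lambda>r. indicator {0<..} r *\<^sub>R (r * (W1 r + (-1) / r\<^sup>2) * eta1 r * \<phi> r)) = (\<lambda>r. indicator {a'..b'} r *\<^sub>R (- (D1 r * \<phi> r)))"
  proof
    fix r :: real
    show "indicator {0<..} r *\<^sub>R (r * (W1 r + (-1) / r\<^sup>2) * eta1 r * \<phi> r) = indicator {a'..b'} r *\<^sub>R (- (D1 r * \<phi> r))"
    proof (cases "r \<in> {a..b}")
      case True then show ?thesis using a'b' by (auto simp: indicator_def D1_def u1e_eta1)
    next
      case False then show ?thesis by (simp add: z)
    qed
  qed
  have cu: "continuous_on {a'..b'} u1e"
    using sp a'b' by (intro continuous_at_imp_continuous_on ballI) (meson DERIV_isCont atLeastAtMost_iff less_le_trans)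
  have cD1: "continuous_on {a'..b'} D1"
    unfolding D1_def using a'b'
    by (intro continuous_intros W1_cont2 cu) auto
  have si2: "set_integrable lborel {a'..b'} (\<lambda>r. - (D1 r * \<phi> r))"
    by (intro borel_integrable_atLeastAtMost' continuous_intros cD1 cphi)
  have R: "(LINT r:{0<..}|lborel. r * (W1 r + (-1) / r\<^sup>2) * eta1 r * \<phi> r) = integral {a'..b'} (\<lambda>r. - (D1 r * \<phi> r))"
    unfolding set_lebesgue_integral_def e2
    using set_borel_integral_eq_integral(2)[OF si2] unfolding set_lebesgue_integral_def by simp
  define I where "I = integral {a'..b'} (\<lambda>r. v1e r * deriv \<phi> r)"
  have ibp: "((\<lambda>r. D1 r * \<phi> r) has_integral (- I)) {a'..b'}"
  proof (rule integration_by_parts[OF bounded_bilinear_mult a'b'(2) cv cphi])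
    show "\<And>x. x \<in> {a'..b'} \<Longrightarrow> (v1e has_vector_derivative D1 x) (at x)"
      using sp a'b' by (auto simp: has_real_derivative_iff_has_vector_derivative[symmetric])
    show "\<And>x. x \<in> {a'..b'} \<Longrightarrow> (\<phi> has_vector_derivative deriv \<phi> x) (at x)"
      using dphi by (auto simp: has_real_derivative_iff_has_vector_derivative[symmetric] DERIV_deriv_iff_real_differentiable)
    have "\<phi> a' = 0" "\<phi> b' = 0" using z a'b' by auto
    moreover have "((\<lambda>r. v1e r * deriv \<phi> r) has_integral I) {a'..b'}"
      unfolding I_def by (intro integrable_integral integrable_continuous_interval continuous_intros cv cdphi)
    ultimately show "((\<lambda>x. v1e x * deriv \<phi> x) has_integral v1e b' * \<phi> b' - v1e a' * \<phi> a' - - I) {a'..b'}"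
      by simp
  qed
  have "integral {a'..b'} (\<lambda>r. - (D1 r * \<phi> r)) = I"
    using integral_unique[OF has_integral_neg[OF ibp]] by simp
  then show "(LINT r:{0<..}|lborel. r * ep r * deriv \<phi> r) =
        (LINT r:{0<..}|lborel. r * (W1 r + (-1) / r\<^sup>2) * eta1 r * \<phi> r)"
    using L R unfolding I_def by simp
qed


lemma eigen_only_minus1:
  assumes D: "Drad \<eta> \<eta>'" and W: "weak_solution \<beta> \<eta> \<eta>'" and \<beta>: "\<beta> < 0" "\<beta> \<noteq> -1"
  shows "\<forall>r>0. \<eta> r = 0"
proof -
  interpret wsol \<eta> \<eta>' \<beta> using D W unfolding Drad_def by unfold_locales auto
  have int: "set_integrable lborel {0<..} (\<lambda>r. (\<eta> r)\<^sup>2 / r)" using D unfolding Drad_def by simp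
  define k where "k = sqrt (- \<beta>)"
  have k: "0 < k" "k \<noteq> 1" "\<beta> = - k\<^sup>2" using \<beta> unfolding k_def by (auto simp: real_sqrt_eq_1_iff)
  have s: "solp \<beta> \<eta> (\<lambda>r. c0 - H r)" unfolding solp_def using eta_deriv p_deriv by auto
  have s1: "solp \<beta> (uu k) (vv k)" using solp_uu[of k] k by simp
  have s2: "solp \<beta> (uu (-k)) (vv (-k))" using solp_uu[of "-k"] k by simp
  have w0: "2 * k * (k\<^sup>2 - 1) \<noteq> 0" using k by (auto simp: power2_eq_1_iff)
  obtain A B where AB: "\<And>r. 0 < r \<Longrightarrow> \<eta> r = A * uu k r + B * uu (-k) r"
    using span2[OF s s1 s2 wronski_uu w0] by blast
  have A: "A = 0"
  proof (rule ccontr)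
    assume "A \<noteq> 0"
    note asym_top[OF k(1,2) this, of B]
    moreover have "\<forall>\<^sub>F r in at_top. (0::real) < r" by (rule eventually_gt_at_top)
    ultimately have "\<forall>\<^sub>F r in at_top. 1 \<le> \<bar>\<eta> r\<bar>"
      by eventually_elim (simp add: AB)
    then show False by (rule noint_top[OF int])
  qed
  have B: "B = 0"
  proof (rule ccontr)
    assume "B \<noteq> 0"
    note asym_zero[OF k(1,2) this, of A]
    moreover have "\<forall>\<^sub>F r in at_right (0::real). 0 < r" by (rule eventually_at_right_less)
    ultimately have "\<forall>\<^sub>F r in at_right 0. 1 \<le> \<bar>\<eta> r\<bar>"
      by eventually_elim (simp add: AB)
    then show False by (rule noint_zero[OF int])
  qed
  show ?thesis using AB A B by simp
qed

lemma unique_minus1: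
  assumes D: "Drad \<eta> \<eta>'" and W: "weak_solution (-1) \<eta> \<eta>'"
  shows "\<exists>c::real. \<forall>r>0. \<eta> r = c * eta1 r"
proof -
  interpret wsol \<eta> \<eta>' "-1" using D W unfolding Drad_def by unfold_locales auto
  have int: "set_integrable lborel {0<..} (\<lambda>r. (\<eta> r)\<^sup>2 / r)" using D unfolding Drad_def by simp
  have s: "solp (-1) \<eta> (\<lambda>r. c0 - H r)" unfolding solp_def using eta_deriv p_deriv by auto
  obtain A B where AB: "\<And>r. 0 < r \<Longrightarrow> \<eta> r = A * u1e r + B * u2e r"
    using span2[OF s solp_1 solp_2 wronski_1] by auto
  have B: "B = 0"
  proof (rule ccontr)
    assume "B \<noteq> 0"
    note asym_1[OF this, of A]
    moreover have "\<forall>\<^sub>F r in at_top. (0::real) < r" by (rule eventually_gt_at_top)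
    ultimately have "\<forall>\<^sub>F r in at_top. 1 \<le> \<bar>\<eta> r\<bar>"
      by eventually_elim (simp add: AB)
    then show False by (rule noint_top[OF int])
  qed
  show ?thesis using AB B u1e_eta1 by auto
qed

theorem propositionA4:
  shows "(\<forall>\<beta>::real. \<beta> < 0 \<longrightarrow> (eigenvalue \<beta> \<longleftrightarrow> \<beta> = -1))
    \<and> (\<exists>\<eta>'. Drad eta1 \<eta>' \<and> weak_solution (-1) eta1 \<eta>')
    \<and> (\<forall>\<eta> \<eta>'. Drad \<eta> \<eta>' \<and> weak_solution (-1) \<eta> \<eta>' \<longrightarrow>
          (\<exists>c::real. \<forall>r>0. \<eta> r = c * eta1 r))"
proof (intro conjI allI impI)
  fix \<beta> :: real assume b: "\<beta> < 0"
  show "eigenvalue \<beta> \<longleftrightarrow> \<beta> = -1"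
  proof
    assume "eigenvalue \<beta>"
    then obtain \<eta> \<eta>' r where D: "Drad \<eta> \<eta>'" and W: "weak_solution \<beta> \<eta> \<eta>'" and r: "0 < r" "\<eta> r \<noteq> 0"
      unfolding eigenvalue_def by blast
    show "\<beta> = -1"
    proof (rule ccontr)
      assume "\<beta> \<noteq> -1"
      from eigen_only_minus1[OF D W b this] r show False by auto
    qed
  next
    assume "\<beta> = -1"
    moreover have "\<exists>r>0. eta1 r \<noteq> 0" by (rule exI[of _ 1]) (simp add: eta1_def)
    ultimately show "eigenvalue \<beta>"
      unfolding eigenvalue_def using Drad_eta1 ws_eta1 by blast
  qed
next
  show "\<exists>\<eta>'. Drad eta1 \<eta>' \<and> weak_solution (-1) eta1 \<eta>'" using Drad_eta1 ws_eta1 by blast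
next
  fix \<eta> \<eta>' :: "real \<Rightarrow> real"
  assume "Drad \<eta> \<eta>' \<and> weak_solution (-1) \<eta> \<eta>'"
  then show "\<exists>c::real. \<forall>r>0. \<eta> r = c * eta1 r" using unique_minus1 by blast
qed

end
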